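(* Let $X$ be a Hilbert space (identified with its dual), and let $\varphi: X\to(-\infty,\infty]$ be a lower semicontinuous, prox-bounded function with $\bar{x}\in\operatorname{dom}\varphi$ and $\bar{v}\in\partial\varphi(\bar{x})$ (limiting subdifferential). Consider: (i) $\varphi$ is variationally convex at $\bar{x}$ for $\bar{v}$; (ii) $\varphi$ is prox-regular at $\bar{x}$ for $\bar{v}$, and the Moreau envelope $e_\lambda\varphi$ is locally convex around $\bar{x}+\lambda\bar{v}$ (convex on some convex neighborhood of $\bar{x}+\lambda\bar{v}$) for all sufficiently small $\lambda>0$. Then (i) $\Rightarrow$ (ii) under these assumptions, and (ii) $\Rightarrow$ (i) if in addition $\varphi$ is weakly sequentially lower semicontinuous around $\bar{x}$.
   Context: Limiting subdifferential: for $\varepsilon\ge0$, $\widehat\partial_\varepsilon\varphi(x):=\{v\in X: \liminf_{y\to x}\frac{\varphi(y)-\varphi(x)-\langle v,y-x\rangle}{\|y-x\|}\ge-\varepsilon\}$; $\partial\varphi(\bar{x})$ is the set of $v$ for which there exist $\varepsilon_k\downarrow0$, $x_k\to\bar{x}$ with $\varphi(x_k)\to\varphi(\bar{x})$, and $v_k\in\widehat\partial_{\varepsilon_k}\varphi(x_k)$ with $v_k\to v$ weakly; for convex functions it is the convex-analysis subdifferential. Variational convexity at $\bar{x}$ for $\bar{v}\in\partial\varphi(\bar x)$: for some convex neighborhood $U\times V$ of $(\bar{x},\bar{v})$ there exist a convex l.s.c. $\widehat\varphi\le\varphi$ on $U$ and $\varepsilon>0$ with $(U_\varepsilon\times V)\cap\operatorname{gph}\partial\varphi=(U\times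 V)\cap\operatorname{gph}\partial\widehat\varphi$ and $\varphi=\widehat\varphi$ at common elements $(x,v)$, where $U_\varepsilon:=\{x\in U:\varphi(x)<\varphi(\bar{x})+\varepsilon\}$. Moreau envelope: $e_\lambda\varphi(x):=\inf_{w\in X}\{\varphi(w)+\frac1{2\lambda}\|w-x\|^2\}$. Prox-bounded: $\varphi(x)\ge\alpha\|x-x_0\|^2+\beta$ for all $x$, for some $\alpha,\beta\in\mathbb{R}$, $x_0\in X$. Prox-regular at $\bar{x}$ for $\bar{v}$: there exist $\varepsilon>0$, $r\ge0$ with $\varphi(x)\ge\varphi(u)+\langle u^*,x-u\rangle-\frac r2\|x-u\|^2$ for all $x$ with $\|x-\bar{x}\|\le\varepsilon$ and all $(u,u^* )\in\operatorname{gph}\partial\varphi$ with $\|u-\bar{x}\|\le\varepsilon$, $\|u^*-\bar{v}\|\le\varepsilon$, $\varphi(u)<\varphi(\bar{x})+\varepsilon$. Weakly sequentially l.s.c. at $x$: $\liminf_k\varphi(x_k)\ge\varphi(x)$ whenever $x_k\to x$ weakly; "around $\bar{x}$" means at every point of a neighborhood of $\bar{x}$. *)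

theory Defs
  imports "HOL-Analysis.Analysis" "HOL-Library.Extended_Real"
begin

definition edom :: "('a \<Rightarrow> ereal) \<Rightarrow> 'a set" where
  "edom f = {x. f x < \<infinity>}"

definition lsc_pt :: "('a::topological_space \<Rightarrow> ereal) \<Rightarrow> 'a \<Rightarrow> bool" where
  "lsc_pt f x \<longleftrightarrow> f x \<le> Liminf (at x) f"

definition lsc_fun :: "('a::topological_space \<Rightarrow> ereal) \<Rightarrow> bool" where
  "lsc_fun f \<longleftrightarrow> (\<forall>x. lsc_pt f x)"

definition weak_conv :: "(nat \<Rightarrow> 'a::real_inner) \<Rightarrow> 'a \<Rightarrow> bool" where
  "weak_conv xs x \<longleftrightarrow> (\<forall>y. (\<lambda>k. inner (xs k) y) \<longlonglongrightarrow> inner x y)"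

definition weakly_seq_lsc_at :: "('a::real_inner \<Rightarrow> ereal) \<Rightarrow> 'a \<Rightarrow> bool" where
  "weakly_seq_lsc_at f x \<longleftrightarrow>
     (\<forall>xs. weak_conv xs x \<longrightarrow> liminf (\<lambda>k. f (xs k)) \<ge> f x)"

definition weakly_seq_lsc_around :: "('a::real_inner \<Rightarrow> ereal) \<Rightarrow> 'a \<Rightarrow> bool" where
  "weakly_seq_lsc_around f x \<longleftrightarrow> (\<exists>W. open W \<and> x \<in> W \<and> (\<forall>y\<in>W. weakly_seq_lsc_at f y))"

definition eps_subdiff :: "('a::real_inner \<Rightarrow> ereal) \<Rightarrow> real \<Rightarrow> 'a \<Rightarrow> 'a set" where
  "eps_subdiff f \<epsilon> x = {v. \<bar>f x\<bar> \<noteq> \<infinity> \<and>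
      Liminf (at x) (\<lambda>y. (f y - f x - ereal (inner v (y - x))) / ereal (norm (y - x)))
        \<ge> - ereal \<epsilon>}"

definition lim_subdiff :: "('a::real_inner \<Rightarrow> ereal) \<Rightarrow> 'a \<Rightarrow> 'a set" where
  "lim_subdiff f x = {v. \<exists>(eps::nat \<Rightarrow> real) xs vs.
      decseq eps \<and> eps \<longlonglongrightarrow> 0 \<and>
      xs \<longlonglongrightarrow> x \<and> (\<lambda>k. f (xs k)) \<longlonglongrightarrow> f x \<and>
      (\<forall>k. vs k \<in> eps_subdiff f (eps k) (xs k)) \<and> weak_conv vs v}"

definition econvex_on :: "'a::real_vector set \<Rightarrow> ('a \<Rightarrow> ereal) \<Rightarrow> bool" where
  "econvex_on S f \<longleftrightarrow> convex S \<and>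
     (\<forall>x\<in>S. \<forall>y\<in>S. \<forall>t::real. 0 < t \<and> t < 1 \<longrightarrow>
        f ((1 - t) *\<^sub>R x + t *\<^sub>R y) \<le> ereal (1 - t) * f x + ereal t * f y)"

definition restr :: "'a set \<Rightarrow> ('a \<Rightarrow> ereal) \<Rightarrow> 'a \<Rightarrow> ereal" where
  "restr U g = (\<lambda>y. if y \<in> U then g y else \<infinity>)"

definition var_convex :: "('a::real_inner \<Rightarrow> ereal) \<Rightarrow> 'a \<Rightarrow> 'a \<Rightarrow> bool" where
  "var_convex f xb vb \<longleftrightarrow>
    (\<exists>U V g \<epsilon>. open U \<and> convex U \<and> xb \<in> U \<and> open V \<and> convex V \<and> vb \<in> V \<and>
       \<epsilon> > 0 \<and>
       econvex_on U g \<and> (\<forall>x\<in>U. lsc_pt (restr U g) x) \<and> (\<forall>x\<in>U. g x \<le> f x) \<and>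
       (\<forall>x v. (x \<in> U \<and> f x < f xb + ereal \<epsilon> \<and> v \<in> V \<and> v \<in> lim_subdiff f x)
           \<longleftrightarrow> (x \<in> U \<and> v \<in> V \<and> v \<in> lim_subdiff (restr U g) x)) \<and>
       (\<forall>x v. x \<in> U \<and> f x < f xb + ereal \<epsilon> \<and> v \<in> V \<and> v \<in> lim_subdiff f x
           \<longrightarrow> f x = g x))"

definition moreau_env :: "real \<Rightarrow> ('a::real_normed_vector \<Rightarrow> ereal) \<Rightarrow> 'a \<Rightarrow> ereal" where
  "moreau_env lam f x = (INF w. f w + ereal (norm (w - x) ^ 2 / (2 * lam)))"

definition prox_bounded :: "('a::real_normed_vector \<Rightarrow> ereal) \<Rightarrow> bool" where
  "prox_bounded f \<longleftrightarrow> (\<exists>\<alpha> \<beta> x0. \<forall>x. f x \<ge> ereal (\<alpha> * norm (x - x0) ^ 2 + \<beta>))"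

definition prox_regular :: "('a::real_inner \<Rightarrow> ereal) \<Rightarrow> 'a \<Rightarrow> 'a \<Rightarrow> bool" where
  "prox_regular f xb vb \<longleftrightarrow>
    (\<exists>\<epsilon>>0. \<exists>r\<ge>0. \<forall>x u us. norm (x - xb) \<le> \<epsilon> \<and> us \<in> lim_subdiff f u \<and>
        norm (u - xb) \<le> \<epsilon> \<and> norm (us - vb) \<le> \<epsilon> \<and> f u < f xb + ereal \<epsilon>
        \<longrightarrow> f x \<ge> f u + ereal (inner us (x - u)) - ereal (r / 2 * norm (x - u) ^ 2))"

definition locally_convex_around :: "('a::real_normed_vector \<Rightarrow> ereal) \<Rightarrow> 'a \<Rightarrow> bool" where
  "locally_convex_around f z \<longleftrightarrow> (\<exists>W. open W \<and> convex W \<and> z \<in> W \<and> econvex_on W f)"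

end

theory Submission
  imports Defs
begin

lemma weak_conv_bounded:
  fixes vs :: "nat \<Rightarrow> 'a::{real_inner,complete_space}"
  assumes "weak_conv vs v"
  shows "\<exists>B. \<forall>k. norm (vs k) \<le> B"
proof -
  define E where "E n = {y::'a. \<forall>k. \<bar>inner (vs k) y\<bar> \<le> real n}" for n
  have cl: "closed (E n)" for n
  proof -
    have "E n = (\<Inter>k. {y. \<bar>inner (vs k) y\<bar> \<le> real n})" by (auto simp: E_def)
    moreover have "closed {y. \<bar>inner (vs k) y\<bar> \<le> real n}" for k
      by (intro closed_Collect_le continuous_intros)
    ultimately show ?thesis by auto
  qed
  have cov: "(\<Union>n. E n) = UNIV"
  proof safe
    fix y :: 'a
    have "(\<lambda>k. inner (vs k) y) \<longlonglongrightarrow> inner v y" using assms by (simp add: weak_conv_def)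
    then have "bounded (range (\<lambda>k. inner (vs k) y))" by (rule convergent_imp_bounded)
    then obtain b where b: "\<And>k. \<bar>inner (vs k) y\<bar> \<le> b" by (auto simp: bounded_iff)
    obtain n::nat where "b \<le> real n" using real_arch_simple by blast
    with b have "y \<in> E n" by (auto simp: E_def intro: order_trans)
    then show "y \<in> (\<Union>n. E n)" by blast
  qed simp
  have "\<exists>n. interior (E n) \<noteq> {}"
  proof (rule ccontr)
    assume "\<not> ?thesis"
    then have "euclidean interior_of \<Union>(range E) = {}"
      by (intro Baire_category_alt) (auto simp: completely_metrizable_space_euclidean cl)
    then show False using cov by simp
  qed
  then obtain n y0 where "y0 \<in> interior (E n)" by blast
  then obtain e where e: "e > 0" "ball y0 e \<subseteq> E n" by (meson open_contains_ball open_interior interior_subset subset_trans)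
  have "norm (vs k) \<le> 4 * real n / e" for k
  proof (cases "vs k = 0")
    case True then show ?thesis using e by simp
  next
    case False
    define d where "d = (e/2) *\<^sub>R (vs k /\<^sub>R norm (vs k))"
    have nd: "norm d = e/2" using False e by (simp add: d_def)
    have "y0 + d \<in> E n" using e nd by (intro subsetD[OF e(2)]) (simp add: dist_norm)
    then have 1: "\<bar>inner (vs k) (y0 + d)\<bar> \<le> real n" by (auto simp: E_def)
    have "y0 \<in> E n" using e by (intro subsetD[OF e(2)]) simp
    then have 2: "\<bar>inner (vs k) y0\<bar> \<le> real n" by (auto simp: E_def)
    have "inner (vs k) d = (e/2) * norm (vs k)" using False
      by (simp add: d_def inner_commute power2_norm_eq_inner[symmetric] power2_eq_square)
    then have "(e/2) * norm (vs k) \<le> 2 * real n" using 1 2 by (simp add: inner_add_right)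
    then show ?thesis using e by (simp add: field_simps)
  qed
  then show ?thesis by blast
qed

lemma lsc_seq:
  fixes h :: "'a::metric_space \<Rightarrow> ereal"
  assumes "lsc_pt h p" "w \<longlonglongrightarrow> p" "(\<lambda>n. h (w n)) \<longlonglongrightarrow> L"
  shows "h p \<le> L"
proof (rule dense_le)
  fix y assume y: "y < h p"
  then have "y < Liminf (at p) h" using assms(1) unfolding lsc_pt_def by auto
  then have "eventually (\<lambda>x. y < h x) (at p)" using le_Liminf_iff by blast
  then have "eventually (\<lambda>x. y < h x) (nhds p)" using y unfolding eventually_at_filter by (auto elim: eventually_mono)
  then have "eventually (\<lambda>n. y < h (w n)) sequentially" using filterlim_iff[THEN iffD1, OF assms(2)] by blast
  then show "y \<le> L" using assms(3) by (intro tendsto_lowerbound[where F=sequentially]) (auto elim: eventually_mono)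
qed

lemma quot_bound:
  assumes "f \<ge> ereal (a + b - c * n^2)" "n > 0"
  shows "(f - ereal a - ereal b) / ereal n \<ge> ereal (- c * n)"
proof (cases f)
  case (real t)
  then have "t \<ge> a + b - c * n^2" using assms by simp
  then have "(t - a - b) / n \<ge> - c * n" using assms(2) by (simp add: field_simps power2_eq_square)
  then show ?thesis using real assms(2) by simp
next
  case PInf then show ?thesis using assms(2) by simp
next
  case MInf then show ?thesis using assms by simp
qed

lemma frechet_of_quad:
  fixes f :: "'a::real_inner \<Rightarrow> ereal"
  assumes fin: "f x = ereal a" and N: "open N" "x \<in> N" and c: "c \<ge> 0"
    and ineq: "\<forall>y\<in>N. f y \<ge> ereal (a + inner v (y - x) - c * norm (y - x)^2)"
  shows "v \<in> lim_subdiff f x"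
proof -
  obtain d where d: "d > 0" "ball x d \<subseteq> N" using N open_contains_ball by blast
  have "Liminf (at x) (\<lambda>y. (f y - f x - ereal (inner v (y - x))) / ereal (norm (y - x))) \<ge> - ereal 0"
    unfolding le_Liminf_iff
  proof (intro allI impI)
    fix yy :: ereal assume yy: "yy < - ereal 0"
    obtain r where r: "r > 0" "ereal (- c * r) > yy"
    proof (cases yy)
      case (real q)
      then have "q < 0" using yy by simp
      show ?thesis
        by (rule that[of "- q / (c + 1)"]) (use \<open>q < 0\<close> c real in \<open>auto simp: field_simps\<close>)
    next
      case MInf then show ?thesis using that[of 1] by simp
    next
      case PInf then show ?thesis using yy by simp
    qed
    have "eventually (\<lambda>y. y \<in> ball x (min d r)) (at x)"
      using d r by (intro eventually_at_in_open') auto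
    moreover have "eventually (\<lambda>y. y \<noteq> x) (at x)" by (rule eventually_at_filter[THEN iffD2]) simp
    ultimately show "eventually (\<lambda>y. yy < (f y - f x - ereal (inner v (y - x))) / ereal (norm (y - x))) (at x)"
    proof eventually_elim
      case (elim y)
      then have n: "norm (y - x) > 0" "norm (y - x) < r" "y \<in> N"
        using d by (auto simp: dist_norm norm_minus_commute)
      have "ereal (- c * norm (y - x)) \<le> (f y - f x - ereal (inner v (y - x))) / ereal (norm (y - x))"
        unfolding fin by (rule quot_bound) (use ineq n in auto)
      moreover have "ereal (- c * r) \<le> ereal (- c * norm (y - x))" using n c
        by (simp add: mult_left_mono)
      ultimately show ?case using r by (meson less_le_trans order_trans)
    qed
  qed
  then have "v \<in> eps_subdiff f 0 x" using fin by (simp add: eps_subdiff_def)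
  then show ?thesis unfolding lim_subdiff_def
    by (intro CollectI exI[of _ "\<lambda>_. 0"] exI[of _ "\<lambda>_. x"] exI[of _ "\<lambda>_. v"])
       (auto simp: weak_conv_def decseq_def)
qed

lemma eps_subdiff_convex:
  fixes h :: "'a::real_inner \<Rightarrow> ereal"
  assumes cv: "econvex_on UNIV h" and v: "v \<in> eps_subdiff h e x"
  shows "\<exists>a. h x = ereal a \<and> h y \<ge> ereal (a + inner v (y - x) - e * norm (y - x))"
proof -
  from v obtain a where a: "h x = ereal a" unfolding eps_subdiff_def by (cases "h x") auto
  have L: "Liminf (at x) (\<lambda>z. (h z - h x - ereal (inner v (z - x))) / ereal (norm (z - x))) \<ge> - ereal e"
    using v by (simp add: eps_subdiff_def)
  have main: "h y \<ge> ereal (a + inner v (y - x) - e * norm (y - x))" if yx: "y \<noteq> x"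
  proof -
    define d where "d = y - x"
    have nd: "norm d > 0" using yx by (simp add: d_def)
    have fl: "filterlim (\<lambda>t. x + t *\<^sub>R d) (at x) (at_right 0)"
    proof -
      have "((\<lambda>t. x + t *\<^sub>R d) \<longlongrightarrow> x + 0 *\<^sub>R d) (at_right 0)"
        by (intro tendsto_intros)
      moreover have "eventually (\<lambda>t. x + t *\<^sub>R d \<noteq> x) (at_right (0::real))"
        using nd by (auto simp: eventually_at_right_field intro!: exI[of _ 1])
      ultimately show ?thesis by (auto simp: filterlim_at)
    qed
    have cvx: "h (x + t *\<^sub>R d) \<le> ereal (1 - t) * ereal a + ereal t * h y" if "0 < t" "t < 1" for t
    proof -
      have "x + t *\<^sub>R d = (1 - t) *\<^sub>R x + t *\<^sub>R y" by (simp add: d_def algebra_simps)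
      moreover have "h ((1 - t) *\<^sub>R x + t *\<^sub>R y) \<le> ereal (1 - t) * h x + ereal t * h y"
        using cv that unfolding econvex_on_def by blast
      ultimately show ?thesis using a by simp
    qed
    define Q where "Q z = (h z - h x - ereal (inner v (z - x))) / ereal (norm (z - x))" for z
    have ev: "eventually (\<lambda>t. yy < Q (x + t *\<^sub>R d)) (at_right 0)" if "yy < - ereal e" for yy
    proof -
      have "eventually (\<lambda>z. yy < Q z) (at x)" using L that unfolding le_Liminf_iff Q_def by blast
      then show ?thesis using filterlim_iff[THEN iffD1, OF fl] by blast
    qed
    have ev01: "eventually (\<lambda>t. 0 < t \<and> t < (1::real)) (at_right 0)"
      by (auto simp: eventually_at_right_field intro!: exI[of _ 1])
    show ?thesis
    proof (cases "h y")
      case PInf then show ?thesis by simp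
    next
      case MInf
      have "eventually (\<lambda>t. ereal (- e - 1) < Q (x + t *\<^sub>R d)) (at_right 0)" by (rule ev) simp
      moreover have "eventually (\<lambda>t. Q (x + t *\<^sub>R d) = - \<infinity>) (at_right 0)"
        using ev01
      proof eventually_elim
        case (elim t)
        have "h (x + t *\<^sub>R d) \<le> ereal (1 - t) * ereal a + ereal t * h y" using cvx elim by auto
        also have "\<dots> = - \<infinity>" using MInf elim by simp
        finally have "h (x + t *\<^sub>R d) = - \<infinity>" by simp
        then show ?case using elim nd a by (simp add: Q_def)
      qed
      ultimately have "eventually (\<lambda>t. False) (at_right (0::real))" by eventually_elim auto
      then show ?thesis by simp
    next
      case (real b)
      have bound: "eventually (\<lambda>t. Q (x + t *\<^sub>R d) \<le> ereal ((b - a - inner v d) / norm d)) (at_right 0)"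
        using ev01
      proof eventually_elim
        case (elim t)
        have le: "h (x + t *\<^sub>R d) \<le> ereal ((1 - t) * a + t * b)" using cvx[of t] elim real by simp
        show ?case
        proof (cases "h (x + t *\<^sub>R d)")
          case (real r)
          then have "r \<le> (1 - t) * a + t * b" using le by simp
          then have "r - a - t * inner v d \<le> t * (b - a - inner v d)" by (simp add: algebra_simps)
          then have "(r - a - t * inner v d) / (t * norm d) \<le> (t * (b - a - inner v d)) / (t * norm d)"
            using elim nd by (intro divide_right_mono) auto
          also have "\<dots> = (b - a - inner v d) / norm d" using elim by simp
          finally show ?thesis using real a elim nd by (simp add: Q_def)
        next
          case PInf then show ?thesis using le by simp
        next
          case MInf then show ?thesis using a by (simp add: Q_def)
        qed
      qed
      have "(b - a - inner v d) / norm d \<ge> - e"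
      proof (rule dense_le_bounded[of "- e - 1"])
        fix w assume w: "- e - 1 < w" "w < - e"
        have "eventually (\<lambda>t. ereal w < Q (x + t *\<^sub>R d)) (at_right 0)" by (rule ev) (use w in simp)
        with bound have "eventually (\<lambda>t. ereal w < ereal ((b - a - inner v d) / norm d)) (at_right (0::real))"
          by eventually_elim (meson less_le_trans)
        then show "w \<le> (b - a - inner v d) / norm d" by simp
      qed simp
      then have "b \<ge> a + inner v d - e * norm d" using nd by (simp add: field_simps)
      then show ?thesis using real by (simp add: d_def)
    qed
  qed
  show ?thesis
  proof (cases "y = x")
    case True then show ?thesis using a by simp
  next
    case False then show ?thesis using main a by blast
  qed
qed

lemma lim_subdiff_convex:
  fixes h :: "'a::{real_inner,complete_space} \<Rightarrow> ereal"
  assumes cv: "econvex_on UNIV h" and v: "v \<in> lim_subdiff h x"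
  shows "\<exists>a. h x = ereal a \<and> (\<forall>y. h y \<ge> ereal (a + inner v (y - x)))"
proof -
  from v obtain eps :: "nat \<Rightarrow> real" and xs vs where
    E: "decseq eps" "eps \<longlonglongrightarrow> 0" "xs \<longlonglongrightarrow> x" "(\<lambda>k. h (xs k)) \<longlonglongrightarrow> h x"
       "\<And>k. vs k \<in> eps_subdiff h (eps k) (xs k)" "weak_conv vs v"
    unfolding lim_subdiff_def by blast
  have eps0: "eps k \<ge> 0" for k using decseq_ge[OF E(1) E(2)] by simp
  obtain B where B: "\<And>k. norm (vs k) \<le> B" using weak_conv_bounded[OF E(6)] by blast
  define A where "A k = real_of_ereal (h (xs k))" for k
  have A1: "h (xs k) = ereal (A k)" for k
    using E(5)[of k] unfolding A_def eps_subdiff_def by (cases "h (xs k)") auto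
  have A2: "h y \<ge> ereal (A k + inner (vs k) (y - xs k) - eps k * norm (y - xs k))" for k y
    using eps_subdiff_convex[OF cv E(5), of k y] A1[of k] by auto
  note A = A1 A2
  have bxs: "bounded (range xs)" using E(3) by (rule convergent_imp_bounded)
  then obtain R0 where R0: "\<And>k. norm (xs k) \<le> R0" by (auto simp: bounded_iff)
  define R where "R = 2 * R0"
  have R: "norm (xs k - xs 0) \<le> R" for k
    using norm_triangle_ineq4[of "xs k" "xs 0"] R0[of k] R0[of 0] unfolding R_def by linarith
  have up: "A k \<le> A 0 + (B + eps 0) * R" for k
  proof -
    have "ereal (A 0) \<ge> ereal (A k + inner (vs k) (xs 0 - xs k) - eps k * norm (xs 0 - xs k))"
      using A(2)[of k "xs 0"] A(1)[of 0] by simp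
    then have 1: "A k \<le> A 0 - inner (vs k) (xs 0 - xs k) + eps k * norm (xs 0 - xs k)" by simp
    have "\<bar>inner (vs k) (xs 0 - xs k)\<bar> \<le> B * R"
    proof -
      have "norm (vs k) * norm (xs 0 - xs k) \<le> B * R"
        using B[of k] R[of k] by (intro mult_mono) (auto simp: norm_minus_commute intro: order_trans[OF norm_ge_zero])
      then show ?thesis using Cauchy_Schwarz_ineq2[of "vs k" "xs 0 - xs k"] by linarith
    qed
    moreover have "eps k * norm (xs 0 - xs k) \<le> eps 0 * R"
      using eps0 R[of k] decseqD[OF E(1), of 0 k] by (intro mult_mono) (auto simp: norm_minus_commute)
    ultimately show ?thesis using 1 by (simp add: algebra_simps)
  qed
  have lo: "A k \<ge> A 0 - (norm (vs 0) + eps 0) * R" for k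
  proof -
    have "ereal (A k) \<ge> ereal (A 0 + inner (vs 0) (xs k - xs 0) - eps 0 * norm (xs k - xs 0))"
      using A(2)[of 0 "xs k"] A(1)[of k] by simp
    then have 1: "A k \<ge> A 0 + inner (vs 0) (xs k - xs 0) - eps 0 * norm (xs k - xs 0)" by simp
    have "\<bar>inner (vs 0) (xs k - xs 0)\<bar> \<le> norm (vs 0) * R"
    proof -
      have "norm (vs 0) * norm (xs k - xs 0) \<le> norm (vs 0) * R"
        using R[of k] by (intro mult_left_mono) auto
      then show ?thesis using Cauchy_Schwarz_ineq2[of "vs 0" "xs k - xs 0"] by linarith
    qed
    moreover have "eps 0 * norm (xs k - xs 0) \<le> eps 0 * R"
      using eps0 R[of k] by (intro mult_left_mono) auto
    ultimately show ?thesis using 1 by (simp add: algebra_simps)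
  qed
  have "h x \<le> ereal (A 0 + (B + eps 0) * R)"
    using E(4) by (rule tendsto_upperbound) (use up A in auto)
  moreover have "h x \<ge> ereal (A 0 - (norm (vs 0) + eps 0) * R)"
    using E(4) by (rule tendsto_lowerbound) (use lo A in auto)
  ultimately obtain a where a: "h x = ereal a" by (cases "h x") auto
  have Aa: "A \<longlonglongrightarrow> a" using E(4) A a by simp
  have "h y \<ge> ereal (a + inner v (y - x))" for y
  proof (cases "h y")
    case PInf then show ?thesis by simp
  next
    case MInf then show ?thesis using A(2)[of 0 y] by simp
  next
    case (real b)
    have ineq: "b \<ge> A k + inner (vs k) (y - x) + inner (vs k) (x - xs k) - eps k * norm (y - xs k)" for k
      using A(2)[of k y] real by (simp add: inner_diff_right)
    have t1: "(\<lambda>k. inner (vs k) (y - x)) \<longlonglongrightarrow> inner v (y - x)" using E(6) by (simp add: weak_conv_def)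
    have t2: "(\<lambda>k. inner (vs k) (x - xs k)) \<longlonglongrightarrow> 0"
    proof (rule Lim_null_comparison[where g="\<lambda>k. B * norm (x - xs k)"])
      show "\<forall>\<^sub>F k in sequentially. norm (inner (vs k) (x - xs k)) \<le> B * norm (x - xs k)"
      proof (intro always_eventually allI)
        fix k
        have "norm (vs k) * norm (x - xs k) \<le> B * norm (x - xs k)"
          using B[of k] by (intro mult_right_mono) auto
        then show "norm (inner (vs k) (x - xs k)) \<le> B * norm (x - xs k)"
          using Cauchy_Schwarz_ineq2[of "vs k" "x - xs k"] by simp
      qed
      have "(\<lambda>k. x - xs k) \<longlonglongrightarrow> 0" using tendsto_diff[OF tendsto_const E(3), of x] by simp
      then show "(\<lambda>k. B * norm (x - xs k)) \<longlonglongrightarrow> 0" by (intro tendsto_mult_right_zero tendsto_norm_zero)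
    qed
    have t3: "(\<lambda>k. eps k * norm (y - xs k)) \<longlonglongrightarrow> 0 * norm (y - x)"
      using E(2,3) by (intro tendsto_intros)
    have "(\<lambda>k. A k + inner (vs k) (y - x) + inner (vs k) (x - xs k) - eps k * norm (y - xs k))
          \<longlonglongrightarrow> a + inner v (y - x) + 0 - 0 * norm (y - x)"
      by (rule tendsto_diff[OF tendsto_add[OF tendsto_add[OF Aa t1] t2] t3])
    then have "a + inner v (y - x) \<le> b"
      using ineq by (intro tendsto_upperbound[where F=sequentially]) auto
    then show ?thesis using real by simp
  qed
  then show ?thesis using a by blast
qed

lemma prox_bounded_loc:
  fixes f :: "'a::real_normed_vector \<Rightarrow> ereal"
  assumes pb: "prox_bounded f" and d: "\<delta> > 0"
  shows "\<exists>l1>0. \<forall>lam z w. 0 < lam \<and> lam < l1 \<and> norm (z - xb) \<le> \<delta>/2 \<and> norm (w - xb) \<ge> \<delta> \<longrightarrow>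
           f w + ereal (norm (w - z)^2 / (2*lam)) \<ge> ereal M"
proof -
  obtain \<alpha> \<beta> x0 where ab: "\<And>x. f x \<ge> ereal (\<alpha> * norm (x - x0) ^ 2 + \<beta>)"
    using pb unfolding prox_bounded_def by blast
  define a where "a = min \<alpha> 0"
  define K where "K = norm (xb - x0) + \<delta>/2"
  define D where "D = M - 2*a*K^2 - \<beta>"
  define l1 where "l1 = min (1 / (1 - 8*a)) (\<delta>^2 / (16 * (\<bar>D\<bar> + 1)))"
  have a0: "a \<le> 0" "a \<le> \<alpha>" by (auto simp: a_def)
  have l1: "l1 > 0" using d a0 by (auto simp: l1_def)
  have "f w + ereal (norm (w - z)^2 / (2*lam)) \<ge> ereal M"
    if lam: "0 < lam" "lam < l1" and z: "norm (z - xb) \<le> \<delta>/2" and w: "norm (w - xb) \<ge> \<delta>" for lam z w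
  proof -
    define n where "n = norm (w - z)"
    define N where "N = norm (w - x0)"
    have "norm (w - xb) \<le> norm (w - z) + norm (z - xb)"
      using norm_triangle_ineq[of "w - z" "z - xb"] by simp
    then have n: "n \<ge> \<delta>/2" using z w by (simp add: n_def)
    have t1: "norm (w - x0) \<le> norm (w - z) + norm (z - x0)"
      using norm_triangle_ineq[of "w - z" "z - x0"] by simp
    have t2: "norm (z - x0) \<le> norm (z - xb) + norm (xb - x0)"
      using norm_triangle_ineq[of "z - xb" "xb - x0"] by simp
    have NK: "N \<le> n + K" using t1 t2 z unfolding n_def N_def K_def by linarith
    have N0: "N \<ge> 0" by (simp add: N_def)
    have s1: "\<alpha> * N^2 \<ge> a * N^2" using a0 by (intro mult_right_mono) auto
    have "N^2 \<le> (n + K)^2" using NK N0 by (intro power_mono) auto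
    also have "\<dots> \<le> 2*n^2 + 2*K^2" using sum_squares_ge_zero[of "n - K" 0] by (simp add: power2_eq_square algebra_simps)
    finally have s2: "N^2 \<le> 2*n^2 + 2*K^2" .
    have s3: "a * N^2 \<ge> a * (2*n^2 + 2*K^2)" using s2 a0 by (intro mult_left_mono_neg) auto
    have ll1: "lam < 1 / (1 - 8*a)" "lam < \<delta>^2 / (16 * (\<bar>D\<bar> + 1))" using lam by (auto simp: l1_def)
    have "1 / lam > 1 - 8*a" using ll1(1) lam a0 by (simp add: field_simps)
    then have c1: "1/(2*lam) + 2*a \<ge> 1/(4*lam)" by (simp add: field_simps)
    have "16 * (\<bar>D\<bar> + 1) * lam < \<delta>^2" using ll1(2) lam by (simp add: field_simps)
    then have c2: "\<delta>^2 / (16 * lam) > \<bar>D\<bar> + 1" using lam by (simp add: field_simps)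
    have "(\<delta>/2)^2 \<le> n^2" using n d by (intro power_mono) auto
    then have c3: "n^2 / (4*lam) \<ge> \<delta>^2 / (16 * lam)" using lam by (simp add: field_simps power2_eq_square)
    have "n^2 / (2*lam) + 2*a*n^2 = n^2 * (1/(2*lam) + 2*a)" by (simp add: algebra_simps)
    also have "\<dots> \<ge> n^2 * (1/(4*lam))" using c1 by (intro mult_left_mono) auto
    finally have c4: "n^2 / (2*lam) + 2*a*n^2 \<ge> n^2 / (4*lam)" by simp
    have "\<alpha> * N^2 + \<beta> + n^2 / (2*lam) \<ge> M"
      using s1 s3 c4 c3 c2 unfolding D_def by (simp add: algebra_simps)
    then have "ereal (\<alpha> * N^2 + \<beta>) + ereal (n^2 / (2*lam)) \<ge> ereal M" by simp
    moreover have "f w \<ge> ereal (\<alpha> * N^2 + \<beta>)" using ab by (simp add: N_def)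
    ultimately show ?thesis unfolding n_def by (meson add_right_mono order_trans)
  qed
  then show ?thesis using l1 by blast
qed

lemma econvex_restr:
  assumes "econvex_on U g"
  shows "econvex_on UNIV (restr U g)"
  unfolding econvex_on_def
proof (intro conjI convex_UNIV ballI allI impI)
  fix x y and t :: real assume t: "0 < t \<and> t < 1"
  show "restr U g ((1 - t) *\<^sub>R x + t *\<^sub>R y) \<le> ereal (1 - t) * restr U g x + ereal t * restr U g y"
  proof (cases "x \<in> U \<and> y \<in> U")
    case True
    then have "(1 - t) *\<^sub>R x + t *\<^sub>R y \<in> U" using assms t unfolding econvex_on_def
      by (intro convexD) auto
    moreover have "g ((1 - t) *\<^sub>R x + t *\<^sub>R y) \<le> ereal (1 - t) * g x + ereal t * g y"
      using True assms t unfolding econvex_on_def by blast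
    ultimately show ?thesis using True unfolding restr_def by simp
  next
    case False
    have eq: "ereal (1 - t) * restr U g x + ereal t * restr U g y = \<infinity>"
      using t False by (auto simp: restr_def)
    show ?thesis unfolding eq by simp
  qed
qed

lemma quad_shift:
  fixes a w xb z :: "'a::real_inner"
  assumes "lam > 0"
  shows "norm (w - z)^2 / (2*lam) + inner a (w - xb)
       = (norm (w - (z - lam *\<^sub>R a))^2 - norm (xb - (z - lam *\<^sub>R a))^2) / (2*lam) + norm (xb - z)^2 / (2*lam)"
proof -
  have "norm (w - (z - lam *\<^sub>R a))^2 = norm (w - z)^2 + 2 * lam * inner a (w - z) + lam^2 * norm a ^2"
    unfolding power2_norm_eq_inner by (simp add: inner_simps inner_commute algebra_simps power2_eq_square)
  moreover have "norm (xb - (z - lam *\<^sub>R a))^2 = norm (xb - z)^2 + 2 * lam * inner a (xb - z) + lam^2 * norm a ^2"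
    unfolding power2_norm_eq_inner by (simp add: inner_simps inner_commute algebra_simps power2_eq_square)
  moreover have "inner a (w - z) - inner a (xb - z) = inner a (w - xb)" by (simp add: inner_simps)
  ultimately show ?thesis using assms by (simp add: field_simps)
qed

lemma parallelogram_mid:
  fixes u v z :: "'a::real_inner"
  shows "norm ((1/2) *\<^sub>R u + (1/2) *\<^sub>R v - z)^2 = (norm (u - z)^2 + norm (v - z)^2)/2 - norm (u - v)^2/4"
proof -
  have zz: "(1/2::real) *\<^sub>R z + (1/2) *\<^sub>R z = z" by (simp add: scaleR_add_left[symmetric])
  have "(1/2) *\<^sub>R u + (1/2) *\<^sub>R v - z = (1/2) *\<^sub>R ((u - z) + (v - z))"
    by (simp add: scaleR_add_right scaleR_diff_right algebra_simps zz)
  moreover have "u - v = (u - z) - (v - z)" by simp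
  ultimately show ?thesis
    by (simp only:) (unfold power2_norm_eq_inner, simp add: inner_simps inner_commute algebra_simps power2_eq_square, simp add: field_simps)
qed

lemma prox_min_convex:
  fixes h :: "'a::{real_inner,complete_space} \<Rightarrow> ereal"
  assumes cv: "econvex_on UNIV h" and hb: "h xb = ereal b0"
    and aff: "\<forall>w. h w \<ge> ereal (b0 + inner a (w - xb))" and lam: "lam > 0"
    and lsc: "\<forall>p. norm (p - (z - lam *\<^sub>R a)) \<le> norm (xb - (z - lam *\<^sub>R a)) \<longrightarrow> lsc_pt h p"
  shows "\<exists>p pv. h p = ereal pv \<and> norm (p - (z - lam *\<^sub>R a)) \<le> norm (xb - (z - lam *\<^sub>R a)) \<and>
           (\<forall>w. h w + ereal (norm (w - z)^2 / (2*lam)) \<ge> ereal (pv + norm (p - z)^2 / (2*lam)))"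
proof -
  define c where "c = z - lam *\<^sub>R a"
  define \<rho> where "\<rho> = norm (xb - c)"
  define q where "q w = norm (w - z)^2 / (2*lam)" for w
  define F where "F w = h w + ereal (q w)" for w
  define E where "E n = inverse (real (Suc n))" for n
  have E0: "E n > 0" for n by (simp add: E_def)
  have hfin: "h w \<noteq> - \<infinity>" for w using aff[rule_format, of w] by auto
  have lowF: "F w \<ge> ereal (b0 + q xb + (norm (w - c)^2 - \<rho>^2)/(2*lam))" for w
  proof -
    have "F w \<ge> ereal (b0 + inner a (w - xb)) + ereal (q w)"
      unfolding F_def using aff by (intro add_right_mono) auto
    moreover have "b0 + inner a (w - xb) + q w = b0 + q xb + (norm (w - c)^2 - \<rho>^2)/(2*lam)"
      using quad_shift[OF lam, of w z a xb] unfolding q_def c_def \<rho>_def by simp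
    ultimately show ?thesis by simp
  qed
  define m where "m = (INF w. F w)"
  have mle: "m \<le> F w" for w unfolding m_def by (rule INF_lower) simp
  have m_up: "m \<le> ereal (b0 + q xb)" using mle[of xb] by (simp add: F_def hb)
  have m_lo: "m \<ge> ereal (b0 + q xb - \<rho>^2/(2*lam))" unfolding m_def
  proof (rule INF_greatest)
    fix w
    have "b0 + q xb - \<rho>^2/(2*lam) \<le> b0 + q xb + (norm (w - c)^2 - \<rho>^2)/(2*lam)"
      using lam by (simp add: field_simps)
    then show "ereal (b0 + q xb - \<rho>^2/(2*lam)) \<le> F w" using lowF[of w] by (meson ereal_less_eq(3) order_trans)
  qed
  obtain mr where mr: "m = ereal mr" using m_up m_lo by (cases m) auto
  have "\<forall>n. \<exists>w. F w < ereal (mr + E n)"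
  proof
    fix n
    have "m < ereal (mr + E n)" using mr E0[of n] by simp
    then show "\<exists>w. F w < ereal (mr + E n)" unfolding m_def by (simp add: INF_less_iff)
  qed
  then obtain ws where ws: "\<And>n. F (ws n) < ereal (mr + E n)" by metis
  define hs where "hs n = real_of_ereal (h (ws n))" for n
  have hs: "h (ws n) = ereal (hs n)" for n
  proof -
    have "h (ws n) \<noteq> \<infinity>" using ws[of n] by (auto simp: F_def)
    then show ?thesis using hfin[of "ws n"] by (cases "h (ws n)") (auto simp: hs_def)
  qed
  define Fn where "Fn n = hs n + q (ws n)" for n
  have Fn_up: "Fn n < mr + E n" for n using ws[of n] by (simp add: F_def hs Fn_def)
  have Fn_lo: "Fn n \<ge> mr" for n using mle[of "ws n"] by (simp add: F_def hs Fn_def mr)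
  have Fge: "F w \<ge> ereal mr" for w using mle[of w] mr by simp
  have cb: "norm (ws n - ws k)^2 \<le> 4 * lam * (E n + E k)" for n k
  proof -
    define mid where "mid = (1 - 1/2) *\<^sub>R ws n + (1/2) *\<^sub>R ws k"
    have "h mid \<le> ereal (1 - 1/2) * h (ws n) + ereal (1/2) * h (ws k)"
    proof -
      have "\<forall>x y. \<forall>t::real. 0 < t \<and> t < 1 \<longrightarrow> h ((1 - t) *\<^sub>R x + t *\<^sub>R y) \<le> ereal (1 - t) * h x + ereal t * h y"
        using cv unfolding econvex_on_def by blast
      from this[rule_format, of "1/2" "ws n" "ws k"] show ?thesis unfolding mid_def by simp
    qed
    also have "\<dots> = ereal ((hs n + hs k)/2)" by (simp add: hs)
    finally have hm: "h mid \<le> ereal ((hs n + hs k)/2)" .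
    have "ereal mr \<le> F mid" by (rule Fge)
    also have "\<dots> \<le> ereal ((hs n + hs k)/2) + ereal (q mid)" unfolding F_def using hm by (rule add_right_mono)
    finally have 1: "mr \<le> (hs n + hs k)/2 + q mid" by simp
    have "norm (mid - z)^2 = (norm (ws n - z)^2 + norm (ws k - z)^2)/2 - norm (ws n - ws k)^2/4"
      using parallelogram_mid[of "ws n" "ws k" z] by (simp add: mid_def)
    then have "q mid = ((norm (ws n - z)^2 + norm (ws k - z)^2)/2 - norm (ws n - ws k)^2/4)/(2*lam)"
      unfolding q_def by simp
    also have "\<dots> = (q (ws n) + q (ws k))/2 - norm (ws n - ws k)^2/(8*lam)"
      unfolding q_def using lam by (simp add: field_simps)
    finally have "q mid = (q (ws n) + q (ws k))/2 - norm (ws n - ws k)^2/(8*lam)" .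
    then have "norm (ws n - ws k)^2/(8*lam) \<le> (Fn n + Fn k)/2 - mr" using 1 unfolding Fn_def by (simp add: field_simps)
    also have "\<dots> \<le> (E n + E k)/2"
    proof -
      have "Fn n + Fn k < 2*mr + E n + E k" using Fn_up[of n] Fn_up[of k] by linarith
      then show ?thesis by (simp add: field_simps)
    qed
    finally show ?thesis using lam by (simp add: field_simps)
  qed
  have "Cauchy ws"
  proof (rule CauchyI)
    fix e :: real assume e: "e > 0"
    have pos: "e^2/(8*lam) > 0" using e lam by simp
    obtain M where M: "inverse (real (Suc M)) < e^2 / (8*lam)"
      using reals_Archimedean[OF pos] by blast
    have M': "inverse (real (Suc M)) * (8*lam) < e^2"
      using M lam by (simp add: pos_less_divide_eq)
    have "norm (ws i - ws j) < e" if "i \<ge> M" "j \<ge> M" for i j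
    proof -
      have Ei: "E i \<le> inverse (real (Suc M))" unfolding E_def
        by (rule le_imp_inverse_le) (use that in auto)
      have Ej: "E j \<le> inverse (real (Suc M))" unfolding E_def
        by (rule le_imp_inverse_le) (use that in auto)
      have "4 * lam * (E i + E j) \<le> 4 * lam * (2 * inverse (real (Suc M)))"
        using lam Ei Ej by (intro mult_left_mono) auto
      moreover have "4 * lam * (2 * inverse (real (Suc M))) = inverse (real (Suc M)) * (8*lam)" by simp
      ultimately have "norm (ws i - ws j)^2 < e^2" using cb[of i j] M' by linarith
      then show ?thesis using e power2_less_imp_less[of "norm (ws i - ws j)" e] by simp
    qed
    then show "\<exists>M. \<forall>i\<ge>M. \<forall>j\<ge>M. norm (ws i - ws j) < e" by blast
  qed
  then obtain p where p: "ws \<longlonglongrightarrow> p" using Cauchy_convergent_iff convergent_def by blast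
  have loc_n: "norm (ws n - c)^2 \<le> \<rho>^2 + 2 * lam * E n" for n
  proof -
    have "ereal (b0 + q xb + (norm (ws n - c)^2 - \<rho>^2)/(2*lam)) \<le> F (ws n)" by (rule lowF)
    also have "\<dots> < ereal (mr + E n)" by (rule ws)
    finally have "b0 + q xb + (norm (ws n - c)^2 - \<rho>^2)/(2*lam) < mr + E n" by simp
    moreover have "mr \<le> b0 + q xb" using m_up mr by simp
    ultimately have "(norm (ws n - c)^2 - \<rho>^2)/(2*lam) < E n" by simp
    then show ?thesis using lam by (simp add: field_simps)
  qed
  have Et: "E \<longlonglongrightarrow> 0" unfolding E_def by (rule LIMSEQ_inverse_real_of_nat)
  have "norm (p - c)^2 \<le> \<rho>^2"
  proof (rule tendsto_le[OF trivial_limit_sequentially])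
    show "(\<lambda>n. \<rho>^2 + 2 * lam * E n) \<longlonglongrightarrow> \<rho>^2"
      using tendsto_add[OF tendsto_const tendsto_mult[OF tendsto_const Et], of "\<rho>^2" "2*lam"] by simp
    show "(\<lambda>n. norm (ws n - c)^2) \<longlonglongrightarrow> norm (p - c)^2" using p by (intro tendsto_intros)
    show "\<forall>\<^sub>F n in sequentially. norm (ws n - c)^2 \<le> \<rho>^2 + 2 * lam * E n" using loc_n by simp
  qed
  then have ploc: "norm (p - c) \<le> \<rho>" by (rule power2_le_imp_le) (simp add: \<rho>_def)
  have Fnt: "Fn \<longlonglongrightarrow> mr"
  proof (rule tendsto_sandwich[of "\<lambda>_. mr" _ _ "\<lambda>n. mr + E n"])
    show "\<forall>\<^sub>F n in sequentially. mr \<le> Fn n" using Fn_lo by simp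
    show "\<forall>\<^sub>F n in sequentially. Fn n \<le> mr + E n" using Fn_up by (simp add: less_imp_le)
    show "(\<lambda>n. mr + E n) \<longlonglongrightarrow> mr" using tendsto_add[OF tendsto_const Et, of mr] by simp
  qed simp
  have qt: "(\<lambda>n. q (ws n)) \<longlonglongrightarrow> q p" unfolding q_def using p lam by (intro tendsto_intros) auto
  have "hs \<longlonglongrightarrow> mr - q p"
    using tendsto_diff[OF Fnt qt] by (simp add: Fn_def)
  then have "(\<lambda>n. h (ws n)) \<longlonglongrightarrow> ereal (mr - q p)" by (simp add: hs)
  moreover have "lsc_pt h p" using lsc ploc unfolding c_def \<rho>_def by blast
  ultimately have hp: "h p \<le> ereal (mr - q p)" using lsc_seq[OF _ p] by blast
  obtain pv where pv: "h p = ereal pv" using hp hfin[of p] by (cases "h p") auto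
  have pvq: "ereal (pv + q p) \<le> ereal mr" using hp pv by simp
  have "h w + ereal (q w) \<ge> ereal (pv + q p)" for w
    using order_trans[OF pvq Fge[of w]] unfolding F_def .
  then show ?thesis using pv ploc unfolding q_def c_def \<rho>_def by blast
qed

lemma quad2:
  fixes p z w :: "'a::real_inner"
  assumes "lam > 0"
  shows "(norm (p - z)^2 - norm (w - z)^2)/(2*lam) = inner ((1/lam) *\<^sub>R (z - p)) (w - p) - norm (w - p)^2/(2*lam)"
proof -
  have "w - z = (w - p) + (p - z)" by simp
  then have "norm (w - z)^2 = norm (w - p)^2 + 2 * inner (w - p) (p - z) + norm (p - z)^2"
    by (simp only:) (unfold power2_norm_eq_inner, simp add: inner_simps inner_commute algebra_simps)
  moreover have "inner (w - p) (p - z) = - inner (z - p) (w - p)" by (simp add: inner_simps inner_commute)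
  moreover have "inner ((1/lam) *\<^sub>R (z - p)) (w - p) = inner (z - p) (w - p) / lam"
    by (simp only: inner_scaleR_left) simp
  ultimately show ?thesis using assms by (simp add: field_simps)
qed

lemma sq_convex:
  fixes a b :: "'a::real_normed_vector"
  assumes "0 \<le> t" "t \<le> 1"
  shows "norm ((1 - t) *\<^sub>R a + t *\<^sub>R b)^2 \<le> (1 - t) * norm a^2 + t * norm b^2"
proof -
  have "norm ((1 - t) *\<^sub>R a + t *\<^sub>R b) \<le> (1 - t) * norm a + t * norm b"
    using norm_triangle_ineq[of "(1 - t) *\<^sub>R a" "t *\<^sub>R b"] assms by simp
  then have "norm ((1 - t) *\<^sub>R a + t *\<^sub>R b)^2 \<le> ((1 - t) * norm a + t * norm b)^2"
    by (intro power_mono) auto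
  also have "\<dots> = (1 - t) * norm a^2 + t * norm b^2 - t * (1 - t) * (norm a - norm b)^2"
    by (simp add: power2_eq_square algebra_simps)
  also have "\<dots> \<le> (1 - t) * norm a^2 + t * norm b^2"
    using assms by simp
  finally show ?thesis .
qed

lemma dir1:
  fixes \<phi> :: "'a::{real_inner, complete_space} \<Rightarrow> ereal"
    and xb vb :: 'a
  assumes nonneginf: "\<forall>x. \<phi> x \<noteq> -\<infinity>"
    and pb: "prox_bounded \<phi>"
    and dom: "xb \<in> edom \<phi>"
    and sub: "vb \<in> lim_subdiff \<phi> xb"
    and vc: "var_convex \<phi> xb vb"
  shows "prox_regular \<phi> xb vb \<and>
             (\<exists>lam0>0. \<forall>lam. 0 < lam \<and> lam < lam0 \<longrightarrow>
                 locally_convex_around (moreau_env lam \<phi>) (xb + lam *\<^sub>R vb))"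
proof -
  obtain U V g \<epsilon> where UV: "open U" "convex U" "xb \<in> U" "open V" "convex V" "vb \<in> V"
    and eps: "\<epsilon> > 0" and gcv: "econvex_on U g" and glsc: "\<forall>x\<in>U. lsc_pt (restr U g) x"
    and gle: "\<forall>x\<in>U. g x \<le> \<phi> x"
    and EQ: "\<forall>x v. (x \<in> U \<and> \<phi> x < \<phi> xb + ereal \<epsilon> \<and> v \<in> V \<and> v \<in> lim_subdiff \<phi> x)
           \<longleftrightarrow> (x \<in> U \<and> v \<in> V \<and> v \<in> lim_subdiff (restr U g) x)"
    and EQ2: "\<forall>x v. x \<in> U \<and> \<phi> x < \<phi> xb + ereal \<epsilon> \<and> v \<in> V \<and> v \<in> lim_subdiff \<phi> x
           \<longrightarrow> \<phi> x = g x"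
    using vc unfolding var_convex_def by blast
  define \<psi> where "\<psi> = restr U g"
  have cv: "econvex_on UNIV \<psi>" unfolding \<psi>_def by (rule econvex_restr[OF gcv])
  obtain fx where fx: "\<phi> xb = ereal fx" using dom nonneginf unfolding edom_def by (cases "\<phi> xb") auto
  have xbl: "\<phi> xb < \<phi> xb + ereal \<epsilon>" using fx eps by simp
  have vbpsi: "vb \<in> lim_subdiff \<psi> xb" using EQ UV sub xbl unfolding \<psi>_def by blast
  have gxb: "g xb = ereal fx" using EQ2 UV sub xbl fx by metis
  have psixb: "\<psi> xb = ereal fx" using gxb UV by (simp add: \<psi>_def restr_def)
  have aff: "\<forall>y. \<psi> y \<ge> ereal (fx + inner vb (y - xb))"
    using lim_subdiff_convex[OF cv vbpsi] psixb by auto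
  obtain e1 where e1: "e1 > 0" "ball xb e1 \<subseteq> U" using UV open_contains_ball by blast
  obtain e2 where e2: "e2 > 0" "ball vb e2 \<subseteq> V" using UV open_contains_ball by blast
  define \<delta> where "\<delta> = min (min e1 e2) \<epsilon> / 2"
  have d0: "\<delta> > 0" "\<delta> \<le> \<epsilon>" using e1 e2 eps by (auto simp: \<delta>_def)
  have dU: "cball xb \<delta> \<subseteq> U" using e1 e2 eps by (intro order_trans[OF _ e1(2)]) (auto simp: \<delta>_def)
  have dV: "cball vb \<delta> \<subseteq> V" using e1 e2 eps by (intro order_trans[OF _ e2(2)]) (auto simp: \<delta>_def)
  have PR0: "\<phi> x \<ge> \<phi> u + ereal (inner us (x - u)) - ereal (0 / 2 * norm (x - u) ^ 2)"
    if H: "norm (x - xb) \<le> \<delta> \<and> us \<in> lim_subdiff \<phi> u \<and> norm (u - xb) \<le> \<delta> \<and> norm (us - vb) \<le> \<delta> \<and> \<phi> u < \<phi> xb + ereal \<delta>"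
    for x u us
  proof -
    have xU: "x \<in> U" using H dU by (auto simp: dist_norm norm_minus_commute)
    have uU: "u \<in> U" using H dU by (auto simp: dist_norm norm_minus_commute)
    have usV: "us \<in> V" using H dV by (auto simp: dist_norm norm_minus_commute)
    have ul: "\<phi> u < \<phi> xb + ereal \<epsilon>" using H d0 fx by (auto elim: less_le_trans)
    have "us \<in> lim_subdiff \<psi> u" using EQ uU usV ul H unfolding \<psi>_def by blast
    then obtain au where au: "\<psi> u = ereal au" "\<forall>y. \<psi> y \<ge> ereal (au + inner us (y - u))"
      using lim_subdiff_convex[OF cv] by blast
    have "\<phi> u = g u" using EQ2 uU usV ul H by blast
    then have pu: "\<phi> u = ereal au" using au uU by (simp add: \<psi>_def restr_def)
    have "ereal (au + inner us (x - u)) \<le> \<phi> x"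
      using au(2)[rule_format, of x] gle xU by (auto simp: \<psi>_def restr_def intro: order_trans)
    then show ?thesis using pu by simp
  qed
  have PR: "prox_regular \<phi> xb vb"
    unfolding prox_regular_def using PR0 d0 by blast
  define M where "M = fx + (1 + norm vb)^2/2 + 1"
  obtain l1 where l1: "l1 > 0" "\<forall>lam z w. 0 < lam \<and> lam < l1 \<and> norm (z - xb) \<le> \<delta>/2 \<and> norm (w - xb) \<ge> \<delta> \<longrightarrow>
           \<phi> w + ereal (norm (w - z)^2 / (2*lam)) \<ge> ereal M"
    using prox_bounded_loc[OF pb d0(1), of xb M] by blast
  define lam0 where "lam0 = min (min 1 l1) (\<delta> / (2 * (1 + norm vb)))"
  define \<eta> where "\<eta> = min 1 (\<delta>/2)"
  have lam0: "lam0 > 0" using l1 d0 by (auto simp: lam0_def add_pos_nonneg)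
  have eta: "\<eta> > 0" "\<eta> \<le> 1" "\<eta> \<le> \<delta>/2" using d0 by (auto simp: \<eta>_def)
  have LC: "locally_convex_around (moreau_env lam \<phi>) (xb + lam *\<^sub>R vb)" if lam: "0 < lam" "lam < lam0" for lam
  proof -
    define z0 where "z0 = xb + lam *\<^sub>R vb"
    define W where "W = ball z0 (lam * \<eta>)"
    have lam1a: "lam \<le> 1" "lam < l1" "lam < \<delta> / (2 * (1 + norm vb))"
      using lam by (auto simp: lam0_def)
    have "lam * (2 * (1 + norm vb)) < \<delta>"
      using lam1a(3) by (subst (asm) pos_less_divide_eq) (auto simp: add_pos_nonneg)
    then have lam1: "lam \<le> 1" "lam < l1" "lam * (1 + norm vb) \<le> \<delta>/2"
      using lam1a by (auto simp: algebra_simps)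
    define q where "q z w = norm (w - z)^2 / (2*lam)" for z w :: 'a
    have K: "\<exists>p pv. \<psi> p = ereal pv \<and> (\<forall>w. \<psi> w + ereal (q z w) \<ge> ereal (pv + q z p))
               \<and> moreau_env lam \<phi> z = ereal (pv + q z p)" if zW: "z \<in> W" for z
    proof -
      define c where "c = z - lam *\<^sub>R vb"
      have xc: "norm (xb - c) = norm (z - z0)" by (simp add: c_def z0_def norm_minus_commute algebra_simps)
      have zz0: "norm (z - z0) < lam * \<eta>" using zW by (simp add: W_def dist_norm norm_minus_commute)
      have near: "norm (p - xb) < \<delta>" if "norm (p - c) \<le> norm (xb - c)" for p
      proof -
        have "norm (p - xb) \<le> norm (p - c) + norm (xb - c)"
          using norm_triangle_ineq4[of "p - c" "xb - c"] by simp
        also have "\<dots> < 2 * (lam * \<eta>)" using that xc zz0 by simp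
        also have "\<dots> \<le> \<delta>"
        proof -
          have "lam * \<eta> \<le> \<eta>" using lam1 eta lam by (intro mult_left_le_one_le) auto
          then show ?thesis using eta by linarith
        qed
        finally show ?thesis .
      qed
      have lscp: "\<forall>p. norm (p - c) \<le> norm (xb - c) \<longrightarrow> lsc_pt \<psi> p"
      proof (intro allI impI)
        fix p assume "norm (p - c) \<le> norm (xb - c)"
        then have "norm (p - xb) < \<delta>" by (rule near)
        then have "p \<in> U" using dU by (auto simp: dist_norm norm_minus_commute)
        then show "lsc_pt \<psi> p" using glsc by (simp add: \<psi>_def)
      qed
      obtain p pv where P: "\<psi> p = ereal pv" "norm (p - c) \<le> norm (xb - c)"
        "\<forall>w. \<psi> w + ereal (norm (w - z)^2 / (2*lam)) \<ge> ereal (pv + norm (p - z)^2 / (2*lam))"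
        using prox_min_convex[OF cv psixb aff lam(1), of z] lscp unfolding c_def by blast
      have Pq: "\<forall>w. \<psi> w + ereal (q z w) \<ge> ereal (pv + q z p)" using P(3) by (simp add: q_def)
      have "norm (p - xb) < \<delta>" by (rule near[OF P(2)])
      then have pU: "p \<in> U" using dU by (auto simp: dist_norm norm_minus_commute)
      define vp where "vp = (1/lam) *\<^sub>R (z - p)"
      have "vp - vb = (1/lam) *\<^sub>R (c - p)" using lam by (simp add: vp_def c_def algebra_simps)
      then have "norm (vp - vb) = norm (p - c) / lam" using lam by (simp add: norm_minus_commute)
      also have "\<dots> < \<eta>" using P(2) xc zz0 lam by (simp add: field_simps)
      finally have vpV: "vp \<in> V" using dV eta by (auto simp: dist_norm norm_minus_commute)
      have vpsub: "vp \<in> lim_subdiff \<psi> p"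
      proof (rule frechet_of_quad[where f=\<psi> and x=p and c="1/(2*lam)" and N=UNIV, OF P(1) open_UNIV UNIV_I])
        show "0 \<le> 1 / (2 * lam)" using lam by simp
        show "\<forall>y\<in>UNIV. ereal (pv + inner vp (y - p) - 1 / (2 * lam) * (norm (y - p))\<^sup>2) \<le> \<psi> y"
        proof
          fix y :: 'a
          have id: "pv + inner vp (y - p) - 1 / (2 * lam) * (norm (y - p))\<^sup>2 = pv + q z p - q z y"
            using quad2[OF lam(1), of p z y] unfolding q_def vp_def by (simp add: diff_divide_distrib)
          show "ereal (pv + inner vp (y - p) - 1 / (2 * lam) * (norm (y - p))\<^sup>2) \<le> \<psi> y"
            unfolding id using Pq[rule_format, of y]
            by (cases "\<psi> y") auto
        qed
      qed
      have pl: "\<phi> p < \<phi> xb + ereal \<epsilon>" "vp \<in> lim_subdiff \<phi> p"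
        using EQ pU vpV vpsub unfolding \<psi>_def by blast+
      have "\<phi> p = g p" using EQ2 pU vpV pl by blast
      then have php: "\<phi> p = ereal pv" using P(1) pU by (simp add: \<psi>_def restr_def)
      have "moreau_env lam \<phi> z = ereal (pv + q z p)"
      proof (rule antisym)
        show "moreau_env lam \<phi> z \<le> ereal (pv + q z p)"
          unfolding moreau_env_def using php by (intro INF_lower2[of p]) (auto simp: q_def)
        show "ereal (pv + q z p) \<le> moreau_env lam \<phi> z"
          unfolding moreau_env_def
        proof (rule INF_greatest)
          fix w :: 'a assume "w \<in> UNIV"
          show "ereal (pv + q z p) \<le> \<phi> w + ereal (norm (w - z)^2 / (2 * lam))"
          proof (cases "w \<in> U")
            case True
            then have "\<psi> w \<le> \<phi> w" using gle by (simp add: \<psi>_def restr_def)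
            then show ?thesis using Pq[rule_format, of w] unfolding q_def
              by (meson add_right_mono order_trans)
          next
            case False
            then have "w \<notin> cball xb \<delta>" using dU by blast
            then have wd: "norm (w - xb) \<ge> \<delta>" by (simp add: dist_norm norm_minus_commute)
            have "norm (z - xb) \<le> norm (z - z0) + norm (z0 - xb)"
              using norm_triangle_ineq[of "z - z0" "z0 - xb"] by simp
            also have "\<dots> \<le> lam * \<eta> + lam * norm vb" using zz0 lam by (simp add: z0_def)
            also have "\<dots> \<le> lam * (1 + norm vb)" using eta lam by (simp add: algebra_simps)
            finally have zxb: "norm (z - xb) \<le> lam * (1 + norm vb)" .
            have "ereal M \<le> \<phi> w + ereal (norm (w - z)^2 / (2 * lam))"
              using l1(2) lam lam1 wd zxb by auto
            moreover have "pv + q z p \<le> M"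
            proof -
              have "ereal (pv + q z p) \<le> \<psi> xb + ereal (q z xb)" using Pq by blast
              then have 1: "pv + q z p \<le> fx + q z xb" using psixb by simp
              have "norm (xb - z)^2 \<le> (lam * (1 + norm vb))^2"
                using zxb by (intro power_mono) (auto simp: norm_minus_commute)
              then have "q z xb \<le> (lam * (1 + norm vb))^2 / (2*lam)" unfolding q_def using lam
                by (intro divide_right_mono) auto
              also have "\<dots> = lam * (1 + norm vb)^2 / 2" using lam by (simp add: power2_eq_square)
              also have "\<dots> \<le> (1 + norm vb)^2 / 2" using lam1 lam
                by (intro divide_right_mono mult_left_le_one_le) auto
              finally show ?thesis using 1 unfolding M_def by simp
            qed
            ultimately show ?thesis by (meson ereal_less_eq(3) order_trans)
          qed
        qed
      qed
      then show ?thesis using P(1) Pq by blast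
    qed
    have "econvex_on W (moreau_env lam \<phi>)"
      unfolding econvex_on_def
    proof (intro conjI ballI allI impI)
      show "convex W" by (simp add: W_def)
      fix z1 z2 and t :: real assume z: "z1 \<in> W" "z2 \<in> W" and t: "0 < t \<and> t < 1"
      define zt where "zt = (1 - t) *\<^sub>R z1 + t *\<^sub>R z2"
      have ztW: "zt \<in> W" unfolding zt_def using z t convexD[of W z1 z2 "1 - t" t] by (simp add: W_def)
      obtain p1 pv1 where 1: "\<psi> p1 = ereal pv1" "moreau_env lam \<phi> z1 = ereal (pv1 + q z1 p1)"
        using K[OF z(1)] by blast
      obtain p2 pv2 where 2: "\<psi> p2 = ereal pv2" "moreau_env lam \<phi> z2 = ereal (pv2 + q z2 p2)"
        using K[OF z(2)] by blast
      obtain p3 pv3 where 3: "\<forall>w. \<psi> w + ereal (q zt w) \<ge> ereal (pv3 + q zt p3)"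
        "moreau_env lam \<phi> zt = ereal (pv3 + q zt p3)"
        using K[OF ztW] by blast
      define pt where "pt = (1 - t) *\<^sub>R p1 + t *\<^sub>R p2"
      have "\<psi> pt \<le> ereal (1 - t) * \<psi> p1 + ereal t * \<psi> p2"
        using cv t unfolding econvex_on_def pt_def by blast
      then have hpt: "\<psi> pt \<le> ereal ((1 - t) * pv1 + t * pv2)" using 1 2 by simp
      have "pt - zt = (1 - t) *\<^sub>R (p1 - z1) + t *\<^sub>R (p2 - z2)"
        by (simp add: pt_def zt_def algebra_simps)
      then have "norm (pt - zt)^2 \<le> (1 - t) * norm (p1 - z1)^2 + t * norm (p2 - z2)^2"
        using sq_convex[of t "p1 - z1" "p2 - z2"] t by simp
      then have qpt: "q zt pt \<le> (1 - t) * q z1 p1 + t * q z2 p2"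
        unfolding q_def using lam by (simp add: field_simps)
      have "ereal (pv3 + q zt p3) \<le> \<psi> pt + ereal (q zt pt)" using 3(1) by blast
      also have "\<dots> \<le> ereal ((1 - t) * pv1 + t * pv2) + ereal (q zt pt)" using hpt by (rule add_right_mono)
      finally have "pv3 + q zt p3 \<le> (1 - t) * (pv1 + q z1 p1) + t * (pv2 + q z2 p2)"
        using qpt by (simp add: algebra_simps)
      then show "moreau_env lam \<phi> ((1 - t) *\<^sub>R z1 + t *\<^sub>R z2) \<le>
          ereal (1 - t) * moreau_env lam \<phi> z1 + ereal t * moreau_env lam \<phi> z2"
        using 1 2 3 by (simp add: zt_def[symmetric])
    qed
    moreover have "open W" "convex W" "z0 \<in> W" using lam eta by (auto simp: W_def)
    ultimately show ?thesis unfolding locally_convex_around_def z0_def by blast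
  qed
  show ?thesis using PR LC lam0 by blast
qed

lemma econvex_real:
  assumes "econvex_on W e" "\<forall>y\<in>W. e y = ereal (E y)" "x \<in> W" "y \<in> W" "0 < t" "t < 1"
  shows "E ((1 - t) *\<^sub>R x + t *\<^sub>R y) \<le> (1 - t) * E x + t * E y"
proof -
  have "(1 - t) *\<^sub>R x + t *\<^sub>R y \<in> W" using assms convexD[of W x y "1 - t" t] unfolding econvex_on_def by auto
  moreover have "e ((1 - t) *\<^sub>R x + t *\<^sub>R y) \<le> ereal (1 - t) * e x + ereal t * e y"
    using assms unfolding econvex_on_def by blast
  ultimately show ?thesis using assms by simp
qed

lemma cvx_upper_to_sub:
  fixes e :: "'a::real_inner \<Rightarrow> ereal"
  assumes cv: "econvex_on W e" and ER: "\<forall>y\<in>W. e y = ereal (E y)" and W: "open W" and zW: "z \<in> W"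
    and C: "C \<ge> 0"
    and up: "\<forall>y\<in>W. E y \<le> E z + inner a (y - z) + C * norm (y - z)^2"
    and yW: "y \<in> W"
  shows "E y \<ge> E z + inner a (y - z)"
proof (rule ccontr)
  assume "\<not> ?thesis"
  then have gap: "E z + inner a (y - z) - E y > 0" by simp
  define d where "d = y - z"
  obtain \<tau> where tau: "\<tau> > 0" "ball z \<tau> \<subseteq> W" using W zW open_contains_ball by blast
  define t where "t = min (1/2) (min (\<tau> / (2 * (norm d + 1))) ((E z + inner a d - E y) / (2 * (C * norm d^2 + 1))))"
  have nd1: "norm d + 1 > 0" using norm_ge_zero[of d] by linarith
  have p1: "\<tau> / (2 * (norm d + 1)) > 0" using tau nd1 by simp
  have "C * norm d^2 \<ge> 0" using C by simp
  then have p2: "(E z + inner a d - E y) / (2 * (C * norm d^2 + 1)) > 0" using gap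
    by (intro divide_pos_pos) (auto simp: d_def)
  have t0: "t > 0" using p1 p2 by (simp add: t_def)
  have t1: "t < 1" by (simp add: t_def)
  have "t \<le> \<tau> / (2 * (norm d + 1))" by (simp add: t_def)
  then have "t * (2 * (norm d + 1)) \<le> \<tau>" using nd1 by (simp add: pos_le_divide_eq)
  moreover have "t * norm d < t * (2 * (norm d + 1))" using t0 norm_ge_zero[of d]
    by (intro mult_strict_left_mono) (auto simp: algebra_simps add_nonneg_pos)
  ultimately have tn: "t * norm d < \<tau>" by linarith
  have m1: "z - t *\<^sub>R d \<in> W" using tau tn t0 by (intro subsetD[OF tau(2)]) (simp add: dist_norm)
  have m2: "z + t *\<^sub>R d \<in> W" using tau tn t0 by (intro subsetD[OF tau(2)]) (simp add: dist_norm)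
  have zeq: "z = (1 - 1/2) *\<^sub>R (z + t *\<^sub>R d) + (1/2) *\<^sub>R (z - t *\<^sub>R d)"
    by (simp add: algebra_simps scaleR_add_left[symmetric])
  have "E z \<le> (1 - 1/2) * E (z + t *\<^sub>R d) + (1/2) * E (z - t *\<^sub>R d)"
    using econvex_real[OF cv ER m2 m1, of "1/2"] zeq by simp
  moreover have "E (z + t *\<^sub>R d) \<le> (1 - t) * E z + t * E y"
  proof -
    have "z + t *\<^sub>R d = (1 - t) *\<^sub>R z + t *\<^sub>R y" by (simp add: d_def algebra_simps)
    then show ?thesis using econvex_real[OF cv ER zW yW t0 t1] by simp
  qed
  moreover have "E (z - t *\<^sub>R d) \<le> E z - t * inner a d + C * (t^2 * norm d^2)"
    using up[rule_format, OF m1] by (simp add: power_mult_distrib abs_of_pos t0 inner_diff_right)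
  ultimately have "t * E z \<le> t * E y - t * inner a d + C * (t^2 * norm d^2)"
    by (simp add: algebra_simps)
  then have "t * (E z + inner a d - E y) \<le> t * (t * (C * norm d^2))"
    by (simp add: algebra_simps power2_eq_square)
  then have 1: "E z + inner a d - E y \<le> t * (C * norm d^2)" using t0 by simp
  have "t \<le> (E z + inner a d - E y) / (2 * (C * norm d^2 + 1))" by (simp add: t_def)
  moreover have "C * norm d^2 + 1 > 0" using \<open>C * norm d^2 \<ge> 0\<close> by linarith
  then have "2 * (C * norm d^2 + 1) > 0" by simp
  ultimately have "t * (2 * (C * norm d^2 + 1)) \<le> E z + inner a d - E y"
    by (simp only: pos_le_divide_eq)
  moreover have "C * norm d^2 < 2 * (C * norm d^2 + 1)" using \<open>C * norm d^2 \<ge> 0\<close> by simp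
  then have "t * (C * norm d^2) < t * (2 * (C * norm d^2 + 1))" using t0
    by (intro mult_strict_left_mono)
  ultimately show False using 1 by linarith
qed

lemma quad3:
  fixes w z d :: "'a::real_inner"
  assumes "lam > 0"
  shows "norm (w - (z + d))^2/(2*lam) = norm (w - z)^2/(2*lam) + inner ((1/lam) *\<^sub>R (z - w)) d + norm d^2/(2*lam)"
proof -
  have "w - (z + d) = (w - z) - d" by simp
  then have "norm (w - (z + d))^2 = norm (w - z)^2 - 2 * inner (w - z) d + norm d^2"
    by (simp only:) (unfold power2_norm_eq_inner, simp add: inner_simps inner_commute algebra_simps)
  moreover have "inner ((1/lam) *\<^sub>R (z - w)) d = - inner (w - z) d / lam"
    by (simp only: inner_scaleR_left) (simp add: inner_simps)
  ultimately show ?thesis using assms by (simp add: field_simps)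
qed

lemma prox_exist_env:
  fixes f :: "'a::{real_inner,complete_space} \<Rightarrow> ereal"
  assumes lsc: "lsc_fun f" and nn: "\<forall>x. f x \<noteq> -\<infinity>" and lam: "lam > 0"
    and cv: "econvex_on W (moreau_env lam f)" and ER: "\<forall>y\<in>W. moreau_env lam f y = ereal (E y)"
    and s: "s > 0" "ball z s \<subseteq> W"
  shows "\<exists>p pv. f p = ereal pv \<and> E z = pv + norm (p - z)^2/(2*lam)"
proof -
  define q where "q y w = norm (w - y)^2/(2*lam)" for y w :: 'a
  define F where "F w = f w + ereal (q z w)" for w
  define E' where "E' n = inverse (real (Suc n))" for n
  have E0: "E' n > 0" for n by (simp add: E'_def)
  have zW: "z \<in> W" using s by auto
  have env: "moreau_env lam f y = (INF w. f w + ereal (q y w))" for y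
    by (simp add: moreau_env_def q_def)
  have Ez: "(INF w. F w) = ereal (E z)" using ER zW env[of z] by (simp add: F_def)
  have Fge: "F w \<ge> ereal (E z)" for w using Ez by (metis INF_lower UNIV_I)
  have "\<forall>n. \<exists>w. F w < ereal (E z + E' n)"
  proof
    fix n
    have "(INF w. F w) < ereal (E z + E' n)" using Ez E0[of n] by simp
    then show "\<exists>w. F w < ereal (E z + E' n)" by (simp add: INF_less_iff)
  qed
  then obtain ws where ws: "\<And>n. F (ws n) < ereal (E z + E' n)" by metis
  define fs where "fs n = real_of_ereal (f (ws n))" for n
  have fs: "f (ws n) = ereal (fs n)" for n
  proof -
    have "f (ws n) \<noteq> \<infinity>" using ws[of n] by (auto simp: F_def)
    then show ?thesis using nn by (cases "f (ws n)") (auto simp: fs_def)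
  qed
  define Fn where "Fn n = fs n + q z (ws n)" for n
  have Fn_up: "Fn n < E z + E' n" for n using ws[of n] by (simp add: F_def fs Fn_def)
  have Fn_lo: "Fn n \<ge> E z" for n using Fge[of "ws n"] by (simp add: F_def fs Fn_def)
  define Q where "Q n = (1/lam) *\<^sub>R (z - ws n)" for n
  have upper: "E (z + d) \<le> E z + E' n + inner (Q n) d + norm d^2/(2*lam)" if d: "norm d < s" for n d
  proof -
    have zd: "z + d \<in> W" using d s by (intro subsetD[OF s(2)]) (simp add: dist_norm)
    have "ereal (E (z + d)) = moreau_env lam f (z + d)" using ER zd by simp
    also have "\<dots> \<le> f (ws n) + ereal (q (z + d) (ws n))" unfolding env by (rule INF_lower) simp
    also have "\<dots> = ereal (Fn n + inner (Q n) d + norm d^2/(2*lam))"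
      using quad3[OF lam, of "ws n" z d] by (simp add: fs Fn_def q_def Q_def)
    finally have "E (z + d) \<le> Fn n + inner (Q n) d + norm d^2/(2*lam)" by simp
    then show ?thesis using Fn_up[of n] by simp
  qed
  have key: "inner (Q m - Q n) d \<le> E' n + E' m + norm d^2/lam" if d: "norm d < s" for n m d
  proof -
    have zd1: "z + d \<in> W" using d s by (intro subsetD[OF s(2)]) (simp add: dist_norm)
    have zd2: "z + (- d) \<in> W" using d s by (intro subsetD[OF s(2)]) (simp add: dist_norm)
    have "z = (1 - 1/2) *\<^sub>R (z + d) + (1/2) *\<^sub>R (z + (- d))"
      by (simp add: algebra_simps scaleR_add_left[symmetric])
    then have mid: "E z \<le> (1 - 1/2) * E (z + d) + (1/2) * E (z + (- d))"
      using econvex_real[OF cv ER zd1 zd2, of "1/2"] by simp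
    have u1: "E (z + d) \<le> E z + E' n + inner (Q n) d + norm d^2/(2*lam)" using upper d by blast
    have u2: "E (z + (- d)) \<le> E z + E' m + inner (Q m) (- d) + norm (- d)^2/(2*lam)"
      using upper[of "- d" m] d by simp
    have "0 \<le> E' n + E' m + inner (Q n) d - inner (Q m) d + norm d^2/lam"
      using mid u1 u2 by (simp add: field_simps)
    then show ?thesis by (simp add: inner_diff_left)
  qed
  have "Cauchy Q"
  proof (rule CauchyI)
    fix e :: real assume e: "e > 0"
    define \<sigma> where "\<sigma> = min (s/2) (lam * e / 4)"
    have sig: "\<sigma> > 0" "\<sigma> < s" "\<sigma> \<le> lam * e / 4" using s e lam by (auto simp: \<sigma>_def)
    have pos: "\<sigma> * e / 4 > 0" using sig e by simp
    obtain N where N: "inverse (real (Suc N)) < \<sigma> * e / 4" using reals_Archimedean[OF pos] by blast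
    have "norm (Q i - Q j) < e" if ij: "i \<ge> N" "j \<ge> N" for i j
    proof (cases "Q i = Q j")
      case True then show ?thesis using e by simp
    next
      case False
      define r where "r = norm (Q i - Q j)"
      have r0: "r > 0" using False by (simp add: r_def)
      define d where "d = (\<sigma> / r) *\<^sub>R (Q i - Q j)"
      have nd: "norm d = \<sigma>" using r0 sig by (simp add: d_def r_def)
      have "inner (Q i - Q j) d = \<sigma> * r"
        using r0 by (simp add: d_def r_def power2_norm_eq_inner[symmetric] power2_eq_square)
      then have 1: "\<sigma> * r \<le> E' j + E' i + \<sigma>^2/lam" using key[of d i j] nd sig by simp
      have Ei: "E' i \<le> inverse (real (Suc N))" unfolding E'_def
        by (rule le_imp_inverse_le) (use ij in auto)
      have Ej: "E' j \<le> inverse (real (Suc N))" unfolding E'_def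
        by (rule le_imp_inverse_le) (use ij in auto)
      have "\<sigma>^2/lam \<le> \<sigma> * (e/4)"
      proof -
        have "\<sigma> * \<sigma> \<le> \<sigma> * (lam * e / 4)" using sig by (intro mult_left_mono) auto
        then show ?thesis using lam by (simp add: power2_eq_square field_simps)
      qed
      moreover have "E' i + E' j < \<sigma> * e / 2" using Ei Ej N by linarith
      ultimately have "\<sigma> * r < \<sigma> * e / 2 + \<sigma> * (e/4)" using 1 by linarith
      moreover have "\<sigma> * e / 2 + \<sigma> * (e/4) = \<sigma> * (3 * e / 4)" by (simp add: field_simps)
      ultimately have "\<sigma> * r < \<sigma> * (3 * e / 4)" by linarith
      then have "r < 3 * e / 4" using sig by simp
      then show ?thesis using e by (simp add: r_def)
    qed
    then show "\<exists>M. \<forall>i\<ge>M. \<forall>j\<ge>M. norm (Q i - Q j) < e" by blast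
  qed
  then obtain Ql where Ql: "Q \<longlonglongrightarrow> Ql" using Cauchy_convergent_iff convergent_def by blast
  have wsQ: "ws n = z - lam *\<^sub>R Q n" for n using lam by (simp add: Q_def)
  define p where "p = z - lam *\<^sub>R Ql"
  have p: "ws \<longlonglongrightarrow> p" unfolding p_def wsQ by (intro tendsto_intros Ql)
  have Et: "E' \<longlonglongrightarrow> 0" unfolding E'_def by (rule LIMSEQ_inverse_real_of_nat)
  have Fnt: "Fn \<longlonglongrightarrow> E z"
  proof (rule tendsto_sandwich[of "\<lambda>_. E z" _ _ "\<lambda>n. E z + E' n"])
    show "\<forall>\<^sub>F n in sequentially. E z \<le> Fn n" using Fn_lo by simp
    show "\<forall>\<^sub>F n in sequentially. Fn n \<le> E z + E' n" using Fn_up by (simp add: less_imp_le)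
    show "(\<lambda>n. E z + E' n) \<longlonglongrightarrow> E z" using tendsto_add[OF tendsto_const Et, of "E z"] by simp
  qed simp
  have qt: "(\<lambda>n. q z (ws n)) \<longlonglongrightarrow> q z p" unfolding q_def using p lam by (intro tendsto_intros) auto
  have "fs \<longlonglongrightarrow> E z - q z p" using tendsto_diff[OF Fnt qt] by (simp add: Fn_def)
  then have "(\<lambda>n. f (ws n)) \<longlonglongrightarrow> ereal (E z - q z p)" by (simp add: fs)
  moreover have "lsc_pt f p" using lsc by (simp add: lsc_fun_def)
  ultimately have hp: "f p \<le> ereal (E z - q z p)" using lsc_seq[OF _ p] by blast
  obtain pv where pv: "f p = ereal pv" using hp nn by (cases "f p") auto
  have "ereal (E z) \<le> F p" by (rule Fge)
  then have "E z \<le> pv + q z p" using pv by (simp add: F_def)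
  moreover have "pv + q z p \<le> E z" using hp pv by simp
  ultimately have "E z = pv + norm (p - z)^2/(2*lam)" by (simp add: q_def)
  then show ?thesis using pv by blast
qed

lemma loc2glob:
  fixes G :: "'a::real_inner \<Rightarrow> real"
  assumes cvx: "\<forall>x\<in>U'. \<forall>y\<in>U'. \<forall>t. 0 < t \<and> t < 1 \<longrightarrow> G ((1 - t) *\<^sub>R x + t *\<^sub>R y) \<le> (1 - t) * G x + t * G y"
    and U: "open U" "U \<subseteq> U'" "convex U'" "x \<in> U"
    and loc: "\<forall>y\<in>U. G y \<ge> G x + inner v (y - x)"
    and yU: "y \<in> U'"
  shows "G y \<ge> G x + inner v (y - x)"
proof (cases "y = x")
  case True then show ?thesis by simp
next
  case False
  obtain \<tau> where tau: "\<tau> > 0" "ball x \<tau> \<subseteq> U" using U open_contains_ball by blast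
  define t where "t = min (1/2) (\<tau> / (2 * norm (y - x)))"
  have ny: "norm (y - x) > 0" using False by simp
  have t0: "0 < t" "t < 1" using tau ny by (auto simp: t_def)
  have "t \<le> \<tau> / (2 * norm (y - x))" by (simp add: t_def)
  then have "t * (2 * norm (y - x)) \<le> \<tau>" using ny by (simp add: pos_le_divide_eq)
  moreover have "t * norm (y - x) < t * (2 * norm (y - x))" using t0 ny by (intro mult_strict_left_mono) auto
  ultimately have tn: "t * norm (y - x) < \<tau>" by linarith
  define pt where "pt = (1 - t) *\<^sub>R x + t *\<^sub>R y"
  have "pt - x = t *\<^sub>R (y - x)" by (simp add: pt_def algebra_simps)
  then have "norm (pt - x) < \<tau>" using tn t0 by simp
  then have ptU: "pt \<in> U" using tau by (auto simp: dist_norm norm_minus_commute)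
  have "G pt \<ge> G x + inner v (pt - x)" using loc ptU by blast
  moreover have "inner v (pt - x) = t * inner v (y - x)" using \<open>pt - x = _\<close> by simp
  moreover have "G pt \<le> (1 - t) * G x + t * G y" using cvx U yU t0 unfolding pt_def by blast
  ultimately have "t * (G x + inner v (y - x)) \<le> t * G y" by (simp add: algebra_simps)
  then show ?thesis using t0 by simp
qed

lemma econvex_on_subset:
  assumes "econvex_on W e" "W' \<subseteq> W" "convex W'"
  shows "econvex_on W' e"
  using assms unfolding econvex_on_def by blast

lemma sup_aff_finite:
  fixes A :: "('a::real_inner \<times> 'a) set"
  assumes g: "g = (\<lambda>y. SUP i\<in>A. ereal (c i + inner (snd i) (y - fst i)))"
    and ne: "A \<noteq> {}" and L: "\<forall>i\<in>A. norm (snd i) \<le> L"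
    and B0: "\<forall>i\<in>A. c i + inner (snd i) (y0 - fst i) \<le> B0"
  shows "g y = ereal (real_of_ereal (g y))"
proof -
  obtain i0 where i0: "i0 \<in> A" using ne by blast
  have lo: "g y \<ge> ereal (c i0 + inner (snd i0) (y - fst i0))" unfolding g using i0 by (rule SUP_upper)
  have up: "g y \<le> ereal (B0 + L * norm (y - y0))" unfolding g
  proof (rule SUP_least)
    fix i assume i: "i \<in> A"
    have "c i + inner (snd i) (y - fst i) = (c i + inner (snd i) (y0 - fst i)) + inner (snd i) (y - y0)"
      by (simp add: inner_diff_right)
    also have "\<dots> \<le> B0 + norm (snd i) * norm (y - y0)"
      using B0 i Cauchy_Schwarz_ineq2[of "snd i" "y - y0"] by (smt (verit) abs_le_iff)
    also have "\<dots> \<le> B0 + L * norm (y - y0)" using L i by (simp add: mult_right_mono)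
    finally show "ereal (c i + inner (snd i) (y - fst i)) \<le> ereal (B0 + L * norm (y - y0))" by simp
  qed
  show ?thesis using lo up by (cases "g y") auto
qed

lemma sup_aff_convex:
  fixes A :: "('a::real_inner \<times> 'a) set"
  assumes g: "g = (\<lambda>y. SUP i\<in>A. ereal (c i + inner (snd i) (y - fst i)))"
    and t: "0 < t" "t < 1"
  shows "g ((1 - t) *\<^sub>R x + t *\<^sub>R y) \<le> ereal (1 - t) * g x + ereal t * g y"
  unfolding g
proof (rule SUP_least)
  fix i assume i: "i \<in> A"
  have "c i + inner (snd i) ((1 - t) *\<^sub>R x + t *\<^sub>R y - fst i)
      = (1 - t) * (c i + inner (snd i) (x - fst i)) + t * (c i + inner (snd i) (y - fst i))"
    by (simp add: inner_simps algebra_simps)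
  then have "ereal (c i + inner (snd i) ((1 - t) *\<^sub>R x + t *\<^sub>R y - fst i))
      = ereal (1 - t) * ereal (c i + inner (snd i) (x - fst i)) + ereal t * ereal (c i + inner (snd i) (y - fst i))"
    by simp
  also have "\<dots> \<le> ereal (1 - t) * (SUP i\<in>A. ereal (c i + inner (snd i) (x - fst i)))
                 + ereal t * (SUP i\<in>A. ereal (c i + inner (snd i) (y - fst i)))"
    using t i by (intro add_mono ereal_mult_left_mono SUP_upper) auto
  finally show "ereal (c i + inner (snd i) ((1 - t) *\<^sub>R x + t *\<^sub>R y - fst i))
      \<le> ereal (1 - t) * (SUP i\<in>A. ereal (c i + inner (snd i) (x - fst i)))
                 + ereal t * (SUP i\<in>A. ereal (c i + inner (snd i) (y - fst i)))" .
qed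

lemma sup_aff_lsc:
  fixes A :: "('a::real_inner \<times> 'a) set"
  assumes g: "g = (\<lambda>y. SUP i\<in>A. ereal (c i + inner (snd i) (y - fst i)))"
    and U: "open U" "x \<in> U"
  shows "lsc_pt (restr U g) x"
  unfolding lsc_pt_def le_Liminf_iff
proof (intro allI impI)
  fix yy assume yy: "yy < restr U g x"
  then have "yy < g x" using U by (simp add: restr_def)
  then obtain i where i: "i \<in> A" "yy < ereal (c i + inner (snd i) (x - fst i))"
    unfolding g by (auto simp: less_SUP_iff)
  define a where "a y = c i + inner (snd i) (y - fst i)" for y
  have "continuous_on UNIV a" unfolding a_def by (intro continuous_intros)
  then have "((\<lambda>y. ereal (a y)) \<longlongrightarrow> ereal (a x)) (at x)"
    by (intro tendsto_intros) (simp add: continuous_on_def)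
  moreover have "yy < ereal (a x)" using i(2) by (simp add: a_def)
  ultimately have ev1: "eventually (\<lambda>y. yy < ereal (a y)) (at x)"
    by (rule order_tendstoD(1))
  have ev2: "eventually (\<lambda>y. y \<in> U) (at x)" using U by (rule eventually_at_in_open')
  show "eventually (\<lambda>y. yy < restr U g y) (at x)"
    using ev1 ev2
  proof eventually_elim
    case (elim y)
    have "ereal (a y) \<le> g y" unfolding g a_def using i(1) by (rule SUP_upper)
    then show ?case using elim by (simp add: restr_def)
  qed
qed

lemma dir2:
  fixes \<phi> :: "'a::{real_inner, complete_space} \<Rightarrow> ereal"
    and xb vb :: 'a
  assumes nonneginf: "\<forall>x. \<phi> x \<noteq> -\<infinity>"
    and lsc: "lsc_fun \<phi>"
    and pb: "prox_bounded \<phi>"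
    and dom: "xb \<in> edom \<phi>"
    and sub: "vb \<in> lim_subdiff \<phi> xb"
    and PRf: "prox_regular \<phi> xb vb"
    and LCf: "\<exists>lam0>0. \<forall>lam. 0 < lam \<and> lam < lam0 \<longrightarrow>
                 locally_convex_around (moreau_env lam \<phi>) (xb + lam *\<^sub>R vb)"
  shows "var_convex \<phi> xb vb"
proof -
  obtain \<epsilon>0 r where e0: "\<epsilon>0 > 0" "r \<ge> 0" and PR: "\<forall>x u us. norm (x - xb) \<le> \<epsilon>0 \<and> us \<in> lim_subdiff \<phi> u \<and>
        norm (u - xb) \<le> \<epsilon>0 \<and> norm (us - vb) \<le> \<epsilon>0 \<and> \<phi> u < \<phi> xb + ereal \<epsilon>0
        \<longrightarrow> \<phi> x \<ge> \<phi> u + ereal (inner us (x - u)) - ereal (r / 2 * norm (x - u) ^ 2)"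
    using PRf unfolding prox_regular_def by blast
  obtain fx where fx: "\<phi> xb = ereal fx" using dom nonneginf unfolding edom_def by (cases "\<phi> xb") auto
  obtain lam0 where lam0: "lam0 > 0" "\<forall>lam. 0 < lam \<and> lam < lam0 \<longrightarrow>
                 locally_convex_around (moreau_env lam \<phi>) (xb + lam *\<^sub>R vb)" using LCf by blast
  define \<epsilon>v where "\<epsilon>v = min \<epsilon>0 1 / 2"
  have ev: "\<epsilon>v > 0" "\<epsilon>v \<le> \<epsilon>0" "\<epsilon>v \<le> 1/2" using e0 by (auto simp: \<epsilon>v_def)
  define Lv where "Lv = norm vb + 1"
  have Lv: "Lv \<ge> 1" "Lv > 0" unfolding Lv_def using norm_ge_zero[of vb] by linarith+
  define M where "M = fx + 1 + Lv^2/2"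
  obtain l1 where l1: "l1 > 0" "\<forall>lam z w. 0 < lam \<and> lam < l1 \<and> norm (z - xb) \<le> \<epsilon>0/2 \<and> norm (w - xb) \<ge> \<epsilon>0 \<longrightarrow>
           \<phi> w + ereal (norm (w - z)^2 / (2*lam)) \<ge> ereal M"
    using prox_bounded_loc[OF pb e0(1), of xb M] by blast
  define lam where "lam = min (min (lam0/2) (l1/2)) (min (min 1 (1/(2*r+1))) (min (\<epsilon>0/(4*Lv)) (\<epsilon>v/(Lv^2+1))))"
  have lam_pos: "lam > 0" using lam0 l1 e0 ev Lv by (auto simp: lam_def add_pos_nonneg)
  have lam_a: "lam < lam0" "lam < l1" "lam \<le> 1" using lam0 l1 by (auto simp: lam_def)
  have "lam \<le> 1/(2*r+1)" by (simp add: lam_def)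
  then have "lam * (2*r+1) \<le> 1" using e0 by (simp add: pos_le_divide_eq add_pos_nonneg)
  then have lam_r: "lam * r \<le> 1/2" using lam_pos by (simp add: algebra_simps)
  have "lam \<le> \<epsilon>0/(4*Lv)" by (simp add: lam_def)
  then have lam_L: "lam * Lv \<le> \<epsilon>0/4" using Lv by (simp add: pos_le_divide_eq field_simps)
  have "lam \<le> \<epsilon>v/(Lv^2+1)" by (simp add: lam_def)
  moreover have "Lv^2+1 > 0" using zero_le_power2[of Lv] by linarith
  ultimately have "lam * (Lv^2+1) \<le> \<epsilon>v" by (simp add: pos_le_divide_eq)
  then have lam_L2: "lam * Lv^2 < \<epsilon>v" using lam_pos by (simp add: algebra_simps)
  define e where "e = moreau_env lam \<phi>"
  define z0 where "z0 = xb + lam *\<^sub>R vb"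
  obtain W where W: "open W" "convex W" "z0 \<in> W" "econvex_on W e"
    using lam0(2) lam_pos lam_a unfolding locally_convex_around_def e_def z0_def by blast
  obtain \<kappa>0 where k0: "\<kappa>0 > 0" "ball z0 \<kappa>0 \<subseteq> W" using W open_contains_ball by blast
  define \<kappa> where "\<kappa> = min \<kappa>0 (\<epsilon>0/4)"
  have kap: "\<kappa> > 0" "\<kappa> \<le> \<epsilon>0/4" using k0 e0 by (auto simp: \<kappa>_def)
  define B where "B = ball z0 \<kappa>"
  have BW: "B \<subseteq> W" using k0 by (auto simp: B_def \<kappa>_def)
  have cvB: "econvex_on B e" using econvex_on_subset[OF W(4) BW] by (simp add: B_def)
  define q where "q y w = norm (w - y)^2/(2*lam)" for y w :: 'a
  have env: "e y = (INF w. \<phi> w + ereal (q y w))" for y by (simp add: e_def moreau_env_def q_def)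
  have LOCl: "\<phi> w + ereal (q y w) \<ge> ereal M" if "norm (y - xb) \<le> \<epsilon>0/2" "norm (w - xb) \<ge> \<epsilon>0" for y w
    using l1(2) lam_pos lam_a that unfolding q_def by blast
  have yB: "norm (y - xb) \<le> \<epsilon>0/2" if "norm (y - z0) < \<kappa>" for y
  proof -
    have "norm (y - xb) \<le> norm (y - z0) + norm (z0 - xb)"
      using norm_triangle_ineq[of "y - z0" "z0 - xb"] by simp
    also have "norm (z0 - xb) \<le> lam * Lv" using lam_pos by (simp add: z0_def Lv_def)
    finally show ?thesis using that kap lam_L by linarith
  qed
  have Efin: "e y = ereal (real_of_ereal (e y))" if y: "y \<in> B" for y
  proof -
    have ny: "norm (y - z0) < \<kappa>" using y by (simp add: B_def dist_norm norm_minus_commute)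
    have up: "e y \<le> ereal (fx + q y xb)" unfolding env using fx by (intro INF_lower2[of xb]) auto
    define lo where "lo = min M (fx - norm vb * \<epsilon>0 - r/2 * \<epsilon>0^2)"
    have low: "e y \<ge> ereal lo" unfolding env
    proof (rule INF_greatest)
      fix w :: 'a assume "w \<in> UNIV"
      show "ereal lo \<le> \<phi> w + ereal (q y w)"
      proof (cases "norm (w - xb) \<ge> \<epsilon>0")
        case True
        then have "ereal M \<le> \<phi> w + ereal (q y w)" using LOCl yB[OF ny] by blast
        moreover have "ereal lo \<le> ereal M" by (simp add: lo_def)
        ultimately show ?thesis by (rule order_trans[rotated])
      next
        case False
        have pr: "\<phi> w \<ge> \<phi> xb + ereal (inner vb (w - xb)) - ereal (r/2 * norm (w - xb)^2)"
          using PR[rule_format, of w vb xb] False sub e0 fx by simp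
        have i1: "inner vb (w - xb) \<ge> - (norm vb * \<epsilon>0)"
        proof -
          have "\<bar>inner vb (w - xb)\<bar> \<le> norm vb * norm (w - xb)" by (rule Cauchy_Schwarz_ineq2)
          also have "\<dots> \<le> norm vb * \<epsilon>0" using False by (intro mult_left_mono) auto
          finally show ?thesis by linarith
        qed
        have i2: "r/2 * norm (w - xb)^2 \<le> r/2 * \<epsilon>0^2"
          using False e0 by (intro mult_left_mono power_mono) auto
        have "lo \<le> fx - norm vb * \<epsilon>0 - r/2 * \<epsilon>0^2" by (simp add: lo_def)
        then have "lo \<le> fx + inner vb (w - xb) - r/2 * norm (w - xb)^2" using i1 i2 by linarith
        then have "ereal lo \<le> ereal (fx + inner vb (w - xb) - r/2 * norm (w - xb)^2)" by simp
        also have "\<dots> \<le> \<phi> w" using pr fx by simp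
        also have "\<dots> \<le> \<phi> w + ereal (q y w)" by (rule ereal_le_add_self) (use lam_pos in \<open>simp add: q_def\<close>)
        finally show ?thesis .
      qed
    qed
    show ?thesis using up low by (cases "e y") auto
  qed
  define E where "E y = real_of_ereal (e y)" for y
  have ER: "\<forall>y\<in>B. e y = ereal (E y)" using Efin by (simp add: E_def)
  define \<beta>' where "\<beta>' = min (\<kappa>/2) 1"
  have bp: "\<beta>' > 0" "\<beta>' \<le> \<kappa>/2" "\<beta>' \<le> 1" using kap by (auto simp: \<beta>'_def)
  define A where "A = {(u, us). u \<in> ball xb \<beta>' \<and> \<phi> u < \<phi> xb + ereal \<epsilon>v \<and> us \<in> ball vb \<beta>' \<and> us \<in> lim_subdiff \<phi> u}"
  have Afin: "\<phi> u = ereal (real_of_ereal (\<phi> u))" if "(u, us) \<in> A" for u us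
  proof -
    have "\<phi> u < \<phi> xb + ereal \<epsilon>v" using that by (simp add: A_def)
    then show ?thesis using nonneginf fx by (cases "\<phi> u") auto
  qed
  have MI: "\<phi> x \<ge> ereal (real_of_ereal (\<phi> u) + inner us (x - u))"
    if uA: "(u, us) \<in> A" and xU: "x \<in> ball xb \<beta>'" for u us x
  proof -
    define fu where "fu = real_of_ereal (\<phi> u)"
    have fu: "\<phi> u = ereal fu" using Afin[OF uA] by (simp add: fu_def)
    have nu: "norm (u - xb) < \<beta>'" "norm (us - vb) < \<beta>'" "us \<in> lim_subdiff \<phi> u"
      "\<phi> u < \<phi> xb + ereal \<epsilon>v"
      using uA by (auto simp: A_def dist_norm norm_minus_commute)
    have nx: "norm (x - xb) < \<beta>'" using xU by (simp add: dist_norm norm_minus_commute)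
    have fuv: "fu < fx + \<epsilon>v" using nu(4) fu fx by simp
    have nus: "norm us \<le> Lv"
    proof -
      have "norm us \<le> norm vb + norm (us - vb)" using norm_triangle_ineq[of vb "us - vb"] by simp
      then show ?thesis using nu(2) bp unfolding Lv_def by linarith
    qed
    have inB: "w + lam *\<^sub>R us \<in> B" if "norm (w - xb) < \<beta>'" for w
    proof -
      have eq: "w + lam *\<^sub>R us - z0 = (w - xb) + lam *\<^sub>R (us - vb)" by (simp add: z0_def algebra_simps)
      have "norm (w + lam *\<^sub>R us - z0) \<le> norm (w - xb) + norm (lam *\<^sub>R (us - vb))"
        unfolding eq by (rule norm_triangle_ineq)
      then have "norm (w + lam *\<^sub>R us - z0) \<le> norm (w - xb) + lam * norm (us - vb)"
        using lam_pos by simp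
      also have "\<dots> < \<beta>' + 1 * \<beta>'"
      proof -
        have "lam * norm (us - vb) \<le> 1 * \<beta>'" using nu(2) lam_pos lam_a by (intro mult_mono) auto
        then show ?thesis using that by linarith
      qed
      also have "\<dots> \<le> \<kappa>" using bp by simp
      finally show ?thesis by (simp add: B_def dist_norm norm_minus_commute)
    qed
    define z where "z = u + lam *\<^sub>R us"
    have zB: "z \<in> B" unfolding z_def by (rule inB[OF nu(1)])
    have "norm (z - z0) < \<kappa>" using zB by (simp add: B_def dist_norm norm_minus_commute)
    then have zxb: "norm (z - xb) \<le> \<epsilon>0/2" by (rule yB)
    have bpe: "\<beta>' \<le> \<epsilon>0" using bp kap e0 by linarith
    have "e z \<ge> ereal (fu + lam * norm us^2 / 2)" unfolding env
    proof (rule INF_greatest)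
      fix w :: 'a assume "w \<in> UNIV"
      show "ereal (fu + lam * norm us^2 / 2) \<le> \<phi> w + ereal (q z w)"
      proof (cases "norm (w - xb) \<ge> \<epsilon>0")
        case True
        then have "ereal M \<le> \<phi> w + ereal (q z w)" using LOCl zxb by blast
        moreover have "fu + lam * norm us^2 / 2 \<le> M"
        proof -
          have "norm us^2 \<le> Lv^2" using nus by (intro power_mono) auto
          then have "lam * norm us^2 \<le> 1 * Lv^2" using lam_a lam_pos by (intro mult_mono) auto
          then show ?thesis using fuv ev unfolding M_def by linarith
        qed
        ultimately show ?thesis by (meson ereal_less_eq(3) order_trans)
      next
        case False
        have pr: "\<phi> w \<ge> \<phi> u + ereal (inner us (w - u)) - ereal (r / 2 * norm (w - u) ^ 2)"
        proof -
          have "\<phi> u < ereal (fx + \<epsilon>v)" using nu(4) fx by simp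
          also have "\<dots> \<le> ereal (fx + \<epsilon>0)" using ev by simp
          finally have "\<phi> u < \<phi> xb + ereal \<epsilon>0" using fx by simp
          then show ?thesis using PR[rule_format, of w us u] False nu bpe by simp
        qed
        have qz: "q z w = norm (w - u)^2/(2*lam) - inner us (w - u) + lam * norm us^2 / 2"
        proof -
          have "q z w = norm (w - u)^2/(2*lam) + inner ((1/lam) *\<^sub>R (u - w)) (lam *\<^sub>R us) + norm (lam *\<^sub>R us)^2/(2*lam)"
            using quad3[OF lam_pos, of w u "lam *\<^sub>R us"] by (simp add: q_def z_def)
          moreover have "inner ((1/lam) *\<^sub>R (u - w)) (lam *\<^sub>R us) = - inner us (w - u)"
            using lam_pos by (simp add: inner_simps inner_commute)
          moreover have "norm (lam *\<^sub>R us)^2/(2*lam) = lam * norm us^2 / 2"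
            using lam_pos by (simp add: power_mult_distrib power2_eq_square)
          ultimately show ?thesis by simp
        qed
        have rq: "r / 2 * norm (w - u)^2 \<le> norm (w - u)^2/(2*lam)"
        proof -
          have "lam * r \<le> 1" using lam_r by linarith
          then have "r \<le> 1/lam" using lam_pos by (simp add: field_simps)
          then have "r / 2 * norm (w - u)^2 \<le> (1/lam)/2 * norm (w - u)^2" by (intro mult_right_mono) auto
          then show ?thesis by simp
        qed
        have "fu + lam * norm us^2 / 2 \<le> fu + inner us (w - u) - r / 2 * norm (w - u)^2 + q z w"
          using qz rq by simp
        then have "ereal (fu + lam * norm us^2 / 2) \<le> ereal (fu + inner us (w - u) - r / 2 * norm (w - u)^2) + ereal (q z w)"
          by simp
        also have "\<dots> \<le> \<phi> w + ereal (q z w)" using pr fu by (intro add_right_mono) simp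
        finally show ?thesis .
      qed
    qed
    then have Ez: "E z \<ge> fu + lam * norm us^2 / 2" using ER zB by simp
    have Eup: "\<forall>y\<in>B. E y \<le> E z + inner us (y - z) + 1/(2*lam) * norm (y - z)^2"
    proof
      fix y assume yB': "y \<in> B"
      have "e y \<le> \<phi> u + ereal (q y u)" unfolding env by (rule INF_lower) simp
      moreover have "q y u = lam * norm us^2 / 2 + inner us (y - z) + 1/(2*lam) * norm (y - z)^2"
      proof -
        have "q y u = norm (u - z)^2/(2*lam) + inner ((1/lam) *\<^sub>R (z - u)) (y - z) + norm (y - z)^2/(2*lam)"
          using quad3[OF lam_pos, of u z "y - z"] by (simp add: q_def)
        moreover have "(1/lam) *\<^sub>R (z - u) = us" using lam_pos by (simp add: z_def)
        moreover have "norm (u - z)^2/(2*lam) = lam * norm us^2 / 2"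
          using lam_pos by (simp add: z_def power_mult_distrib power2_eq_square)
        ultimately show ?thesis by simp
      qed
      ultimately have "E y \<le> fu + lam * norm us^2 / 2 + inner us (y - z) + 1/(2*lam) * norm (y - z)^2"
        using ER yB' fu by simp
      then show "E y \<le> E z + inner us (y - z) + 1/(2*lam) * norm (y - z)^2" using Ez by linarith
    qed
    define z' where "z' = x + lam *\<^sub>R us"
    have z'B: "z' \<in> B" unfolding z'_def by (rule inB[OF nx])
    have Ez': "E z' \<ge> E z + inner us (z' - z)"
      by (rule cvx_upper_to_sub[OF cvB ER _ zB _ Eup z'B]) (use lam_pos in \<open>auto simp: B_def\<close>)
    have "e z' \<le> \<phi> x + ereal (q z' x)" unfolding env by (rule INF_lower) simp
    moreover have "q z' x = lam * norm us^2 / 2"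
      using lam_pos by (simp add: q_def z'_def power_mult_distrib power2_eq_square)
    moreover have "z' - z = x - u" by (simp add: z'_def z_def)
    ultimately have "ereal (E z') \<le> \<phi> x + ereal (lam * norm us^2 / 2)" using ER z'B by simp
    moreover have "E z' \<ge> fu + inner us (x - u) + lam * norm us^2 / 2" using Ez Ez' \<open>z' - z = x - u\<close> by simp
    ultimately show ?thesis unfolding fu_def[symmetric] by (cases "\<phi> x") auto
  qed
  define c where "c i = real_of_ereal (\<phi> (fst i))" for i :: "'a \<times> 'a"
  define g where "g = (\<lambda>y. SUP i\<in>A. ereal (c i + inner (snd i) (y - fst i)))"
  define U' where "U' = ball xb \<beta>'"
  have xbA: "(xb, vb) \<in> A" using sub bp fx ev by (simp add: A_def)
  have Ane: "A \<noteq> {}" using xbA by blast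
  have AL: "\<forall>i\<in>A. norm (snd i) \<le> Lv"
  proof
    fix i assume "i \<in> A"
    then have "norm (snd i - vb) < \<beta>'" by (auto simp: A_def dist_norm norm_minus_commute)
    moreover have "norm (snd i) \<le> norm vb + norm (snd i - vb)"
      using norm_triangle_ineq[of vb "snd i - vb"] by simp
    ultimately show "norm (snd i) \<le> Lv" using bp unfolding Lv_def by linarith
  qed
  have xbU': "xb \<in> U'" using bp by (simp add: U'_def)
  have AB: "\<forall>i\<in>A. c i + inner (snd i) (xb - fst i) \<le> fx"
  proof
    fix i assume iA: "i \<in> A"
    obtain u us where i: "i = (u, us)" by (cases i)
    have "ereal (c i + inner (snd i) (xb - fst i)) \<le> \<phi> xb"
      using MI[of u us xb] iA xbU' by (simp add: i c_def U'_def)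
    then show "c i + inner (snd i) (xb - fst i) \<le> fx" using fx by simp
  qed
  define Gr where "Gr y = real_of_ereal (g y)" for y
  have gfin: "g y = ereal (Gr y)" for y
    using sup_aff_finite[OF g_def Ane AL AB] by (simp add: Gr_def)
  have gle: "g x \<le> \<phi> x" if "x \<in> U'" for x
    unfolding g_def
  proof (rule SUP_least)
    fix i assume iA: "i \<in> A"
    obtain u us where i: "i = (u, us)" by (cases i)
    show "ereal (c i + inner (snd i) (x - fst i)) \<le> \<phi> x"
      using MI[of u us x] iA that by (simp add: i c_def U'_def)
  qed
  have gA: "g x = \<phi> x" if "(x, v) \<in> A" for x v
  proof (rule antisym)
    show "g x \<le> \<phi> x" using that by (intro gle) (simp add: A_def U'_def)
    have "ereal (c (x, v) + inner (snd (x, v)) (x - fst (x, v))) \<le> g x"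
      unfolding g_def using that by (rule SUP_upper)
    then show "\<phi> x \<le> g x" using Afin[OF that] by (simp add: c_def)
  qed
  have gcvx: "\<forall>x\<in>U'. \<forall>y\<in>U'. \<forall>t. 0 < t \<and> t < 1 \<longrightarrow> Gr ((1 - t) *\<^sub>R x + t *\<^sub>R y) \<le> (1 - t) * Gr x + t * Gr y"
  proof (intro ballI allI impI)
    fix x y and t :: real assume t: "0 < t \<and> t < 1"
    have "g ((1 - t) *\<^sub>R x + t *\<^sub>R y) \<le> ereal (1 - t) * g x + ereal t * g y"
      using sup_aff_convex[OF g_def] t by blast
    then show "Gr ((1 - t) *\<^sub>R x + t *\<^sub>R y) \<le> (1 - t) * Gr x + t * Gr y" by (simp add: gfin)
  qed
  define \<beta> where "\<beta> = lam * \<beta>' / 8"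
  have bb: "\<beta> > 0" "\<beta> \<le> \<beta>'/8" using lam_pos lam_a bp by (auto simp: \<beta>_def)
  define U where "U = ball xb \<beta>"
  define V where "V = ball vb \<beta>"
  have UU': "U \<subseteq> U'" using bb bp by (auto simp: U_def U'_def)
  have gcvU: "econvex_on U g" unfolding econvex_on_def
    using sup_aff_convex[OF g_def] by (auto simp: U_def)
  have HI: "\<phi> x < \<phi> xb + ereal \<epsilon>v \<and> v \<in> lim_subdiff \<phi> x"
    if xU: "x \<in> U" and vV: "v \<in> V" and vs: "v \<in> lim_subdiff (restr U g) x" for x v
  proof -
    have cvU: "econvex_on UNIV (restr U g)" by (rule econvex_restr[OF gcvU])
    obtain a where a: "restr U g x = ereal a" "\<forall>y. restr U g y \<ge> ereal (a + inner v (y - x))"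
      using lim_subdiff_convex[OF cvU vs] by blast
    have aG: "a = Gr x" using a(1) xU gfin[of x] by (simp add: restr_def)
    have loc: "\<forall>y\<in>U. Gr y \<ge> Gr x + inner v (y - x)"
    proof
      fix y assume "y \<in> U"
      then show "Gr y \<ge> Gr x + inner v (y - x)" using a(2)[rule_format, of y] aG gfin[of y] by (simp add: restr_def)
    qed
    have glob: "Gr y \<ge> Gr x + inner v (y - x)" if "y \<in> U'" for y
      by (rule loc2glob[OF gcvx _ UU' _ xU loc that]) (auto simp: U_def U'_def)
    define z where "z = x + lam *\<^sub>R v"
    define \<rho> where "\<rho> = norm (z - z0)"
    have nxv: "norm (x - xb) < \<beta>" "norm (v - vb) < \<beta>" using xU vV by (auto simp: U_def V_def dist_norm norm_minus_commute)
    have rho: "\<rho> < 2 * \<beta>"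
    proof -
      have eq: "z - z0 = (x - xb) + lam *\<^sub>R (v - vb)" by (simp add: z_def z0_def algebra_simps)
      have "\<rho> \<le> norm (x - xb) + norm (lam *\<^sub>R (v - vb))" unfolding \<rho>_def eq by (rule norm_triangle_ineq)
      moreover have "lam * norm (v - vb) \<le> 1 * \<beta>" using lam_pos lam_a nxv by (intro mult_mono) auto
      moreover have "norm (lam *\<^sub>R (v - vb)) = lam * norm (v - vb)" using lam_pos by simp
      ultimately show ?thesis using nxv by linarith
    qed
    have b8: "8 * \<beta> = lam * \<beta>'" by (simp add: \<beta>_def)
    have ballB: "ball z (\<kappa>/2) \<subseteq> B"
    proof
      fix y assume "y \<in> ball z (\<kappa>/2)"
      then have "norm (y - z) < \<kappa>/2" by (simp add: dist_norm norm_minus_commute)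
      moreover have "norm (y - z0) \<le> norm (y - z) + \<rho>"
        using norm_triangle_ineq[of "y - z" "z - z0"] by (simp add: \<rho>_def)
      moreover have "2 * \<beta> \<le> \<kappa>/2" using bb bp kap by linarith
      ultimately show "y \<in> B" using rho by (simp add: B_def dist_norm norm_minus_commute)
    qed
    have cvB': "econvex_on B (moreau_env lam \<phi>)" using cvB by (simp add: e_def)
    have ER': "\<forall>y\<in>B. moreau_env lam \<phi> y = ereal (E y)" using ER by (simp add: e_def)
    obtain p pv where P: "\<phi> p = ereal pv" "E z = pv + norm (p - z)^2/(2*lam)"
      using prox_exist_env[OF lsc nonneginf lam_pos cvB' ER' _ ballB] kap by auto
    have zB: "z \<in> B" using ballB kap by auto
    have Pq: "E z = pv + q z p" using P(2) by (simp add: q_def)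
    have minF: "ereal (E z) \<le> \<phi> w + ereal (q z w)" for w
    proof -
      have "e z \<le> \<phi> w + ereal (q z w)" unfolding env by (rule INF_lower) simp
      then show ?thesis using ER zB by simp
    qed
    have zxb: "norm (z - xb) \<le> lam * Lv"
    proof -
      have "norm (z - xb) \<le> \<rho> + norm (z0 - xb)"
        using norm_triangle_ineq[of "z - z0" "z0 - xb"] by (simp add: \<rho>_def)
      moreover have "norm (z0 - xb) = lam * norm vb" using lam_pos by (simp add: z0_def)
      moreover have "2 * \<beta> \<le> lam"
      proof -
        have "lam * \<beta>' \<le> lam * 1" using bp lam_pos by (intro mult_left_mono) auto
        then show ?thesis using b8 lam_pos by linarith
      qed
      ultimately show ?thesis using rho unfolding Lv_def by (simp add: algebra_simps)
    qed
    have qxb: "q z xb \<le> lam * Lv^2 / 2"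
    proof -
      have "norm (xb - z)^2 \<le> (lam * Lv)^2" using zxb by (intro power_mono) (auto simp: norm_minus_commute)
      then have "q z xb \<le> (lam * Lv)^2 / (2*lam)" unfolding q_def using lam_pos by (intro divide_right_mono) auto
      also have "\<dots> = lam * Lv^2 / 2" using lam_pos by (simp add: power2_eq_square)
      finally show ?thesis .
    qed
    have Ezx: "E z \<le> fx + q z xb" using minF[of xb] fx by simp
    have zxb2: "norm (z - xb) \<le> \<epsilon>0/2" using zxb lam_L e0 by linarith
    have tle: "norm (p - xb) < \<epsilon>0"
    proof (rule ccontr)
      assume "\<not> ?thesis"
      then have "ereal M \<le> \<phi> p + ereal (q z p)" using LOCl zxb2 by simp
      then have "M \<le> E z" using P(1) Pq by simp
      moreover have "lam * Lv^2 / 2 \<le> Lv^2/2" using lam_a lam_pos by (simp add: mult_left_le_one_le)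
      ultimately show False using Ezx qxb unfolding M_def by linarith
    qed
    define cc where "cc = z - lam *\<^sub>R vb"
    have ccr: "norm (xb - cc) = \<rho>" by (simp add: cc_def \<rho>_def z0_def algebra_simps norm_minus_commute)
    define t where "t = norm (p - xb)"
    have prp: "\<phi> p \<ge> \<phi> xb + ereal (inner vb (p - xb)) - ereal (r / 2 * norm (p - xb) ^ 2)"
      using PR[rule_format, of p vb xb] tle sub e0 fx by simp
    then have pv1: "pv \<ge> fx + inner vb (p - xb) - r/2 * t^2" using P(1) fx by (simp add: t_def)
    have qs: "q z p + inner vb (p - xb) = (norm (p - cc)^2 - \<rho>^2)/(2*lam) + q z xb"
      using quad_shift[OF lam_pos, of p z vb xb] ccr unfolding q_def cc_def by simp
    have "(norm (p - cc)^2 - \<rho>^2)/(2*lam) \<le> r/2 * t^2" using pv1 qs Ezx Pq by linarith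
    then have "norm (p - cc)^2 - \<rho>^2 \<le> lam * r * t^2" using lam_pos by (simp add: field_simps)
    moreover have "lam * r * t^2 \<le> (1/2) * t^2" using lam_r by (intro mult_right_mono) auto
    ultimately have pc: "norm (p - cc)^2 \<le> \<rho>^2 + t^2/2" by linarith
    have tpc: "t \<le> norm (p - cc) + \<rho>"
      using norm_triangle_ineq[of "p - cc" "cc - xb"] ccr by (simp add: t_def norm_minus_commute)
    have t4: "t \<le> 4 * \<rho>"
    proof (rule ccontr)
      assume "\<not> ?thesis"
      then have tr: "t > 4 * \<rho>" by simp
      have r0: "\<rho> \<ge> 0" by (simp add: \<rho>_def)
      have "(t - \<rho>)^2 \<le> norm (p - cc)^2" using tpc tr r0 by (intro power_mono) auto
      then have "(t - \<rho>)^2 \<le> \<rho>^2 + t^2/2" using pc by linarith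
      then have "t * (t/2 - 2 * \<rho>) \<le> 0" by (simp add: power2_eq_square algebra_simps)
      moreover have "t * (t/2 - 2 * \<rho>) > 0" using tr r0 by (intro mult_pos_pos) auto
      ultimately show False by linarith
    qed
    have pc3: "norm (p - cc) \<le> 3 * \<rho>"
    proof -
      have "t^2 \<le> (4 * \<rho>)^2" using t4 by (intro power_mono) (auto simp: t_def)
      then have "norm (p - cc)^2 \<le> (3 * \<rho>)^2" using pc by (simp add: power2_eq_square)
      then show ?thesis by (rule power2_le_imp_le) (simp add: \<rho>_def)
    qed
    have pU': "p \<in> U'"
    proof -
      have "t < 8 * \<beta>" using t4 rho by linarith
      also have "\<dots> \<le> \<beta>'" using b8 bp lam_a lam_pos by (simp add: mult_left_le_one_le)
      finally show ?thesis by (simp add: U'_def t_def dist_norm norm_minus_commute)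
    qed
    define ps where "ps = (1/lam) *\<^sub>R (z - p)"
    have psV: "norm (ps - vb) < \<beta>'"
    proof -
      have "ps - vb = (1/lam) *\<^sub>R (cc - p)" using lam_pos by (simp add: ps_def cc_def algebra_simps)
      then have "norm (ps - vb) = norm (p - cc) / lam" using lam_pos by (simp add: norm_minus_commute)
      also have "\<dots> \<le> 3 * \<rho> / lam" using pc3 lam_pos by (intro divide_right_mono) auto
      also have "\<dots> < 6 * \<beta> / lam" using rho lam_pos by (intro divide_strict_right_mono) auto
      also have "\<dots> = 6 * \<beta>' / 8" using lam_pos by (simp add: \<beta>_def)
      also have "\<dots> < \<beta>'" using bp by simp
      finally show ?thesis .
    qed
    have pvl: "\<phi> p < \<phi> xb + ereal \<epsilon>v"
    proof -
      have "q z p \<ge> 0" unfolding q_def using lam_pos by simp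
      then have "pv \<le> fx + lam * Lv^2 / 2" using Ezx qxb Pq by linarith
      moreover have "lam * Lv^2 \<ge> 0" using lam_pos by simp
      ultimately have "pv < fx + \<epsilon>v" using lam_L2 by linarith
      then show ?thesis using P(1) fx by simp
    qed
    have pssub: "ps \<in> lim_subdiff \<phi> p"
    proof (rule frechet_of_quad[where f=\<phi> and x=p and c="1/(2*lam)" and N=UNIV, OF P(1) open_UNIV UNIV_I])
      show "0 \<le> 1 / (2 * lam)" using lam_pos by simp
      show "\<forall>y\<in>UNIV. ereal (pv + inner ps (y - p) - 1 / (2 * lam) * (norm (y - p))\<^sup>2) \<le> \<phi> y"
      proof
        fix y :: 'a
        have id: "pv + inner ps (y - p) - 1 / (2 * lam) * (norm (y - p))\<^sup>2 = E z - q z y"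
          using quad2[OF lam_pos, of p z y] Pq unfolding q_def ps_def by (simp add: diff_divide_distrib)
        show "ereal (pv + inner ps (y - p) - 1 / (2 * lam) * (norm (y - p))\<^sup>2) \<le> \<phi> y"
          unfolding id using minF[of y] by (cases "\<phi> y") auto
      qed
    qed
    have pA: "(p, ps) \<in> A" using pU' psV pvl pssub by (simp add: A_def U'_def dist_norm norm_minus_commute)
    have "ereal (c (p, ps) + inner (snd (p, ps)) (x - fst (p, ps))) \<le> g x" unfolding g_def using pA by (rule SUP_upper)
    then have g1: "Gr x \<ge> pv + inner ps (x - p)" using gfin[of x] P(1) by (simp add: c_def)
    have g2: "Gr p \<le> pv" using gle[OF pU'] gfin[of p] P(1) by simp
    have g3: "Gr p \<ge> Gr x + inner v (p - x)" by (rule glob[OF pU'])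
    have "inner (v - ps) (p - x) \<le> 0" using g1 g2 g3 by (simp add: inner_diff_left inner_diff_right inner_commute)
    moreover have "v - ps = (1/lam) *\<^sub>R (p - x)" using lam_pos by (simp add: ps_def z_def algebra_simps)
    ultimately have "(1/lam) * norm (p - x)^2 \<le> 0" by (simp add: power2_norm_eq_inner)
    then have "norm (p - x)^2 / lam \<le> 0" by simp
    then have "norm (p - x)^2 \<le> 0" using lam_pos by (simp add: divide_le_0_iff)
    then have px: "p = x" by simp
    then have "ps = v" using lam_pos by (simp add: ps_def z_def)
    then show ?thesis using pvl pssub px by simp
  qed
  have VV': "V \<subseteq> ball vb \<beta>'" using bb bp by (auto simp: V_def)
  have inA: "(x, v) \<in> A" if "x \<in> U" "\<phi> x < \<phi> xb + ereal \<epsilon>v" "v \<in> V" "v \<in> lim_subdiff \<phi> x" for x v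
    using that UU' VV' by (auto simp: A_def U'_def)
  have fwd: "v \<in> lim_subdiff (restr U g) x"
    if H: "x \<in> U" "\<phi> x < \<phi> xb + ereal \<epsilon>v" "v \<in> V" "v \<in> lim_subdiff \<phi> x" for x v
  proof -
    have xA: "(x, v) \<in> A" by (rule inA[OF H])
    have rx: "restr U g x = ereal (c (x, v))" using gA[OF xA] Afin[OF xA] H(1) by (simp add: restr_def c_def)
    show ?thesis
    proof (rule frechet_of_quad[where f="restr U g" and x=x and c=0 and N=U, OF rx])
      show "open U" by (simp add: U_def)
      show "x \<in> U" by fact
      show "(0::real) \<le> 0" by simp
      show "\<forall>y\<in>U. ereal (c (x, v) + inner v (y - x) - 0 * (norm (y - x))\<^sup>2) \<le> restr U g y"
      proof
        fix y assume "y \<in> U"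
        have "ereal (c (x, v) + inner (snd (x, v)) (y - fst (x, v))) \<le> g y"
          unfolding g_def using xA by (rule SUP_upper)
        then show "ereal (c (x, v) + inner v (y - x) - 0 * (norm (y - x))\<^sup>2) \<le> restr U g y"
          using \<open>y \<in> U\<close> by (simp add: restr_def)
      qed
    qed
  qed
  have EQ: "\<forall>x v. (x \<in> U \<and> \<phi> x < \<phi> xb + ereal \<epsilon>v \<and> v \<in> V \<and> v \<in> lim_subdiff \<phi> x)
           \<longleftrightarrow> (x \<in> U \<and> v \<in> V \<and> v \<in> lim_subdiff (restr U g) x)"
    using fwd HI by blast
  have EQ2: "\<forall>x v. x \<in> U \<and> \<phi> x < \<phi> xb + ereal \<epsilon>v \<and> v \<in> V \<and> v \<in> lim_subdiff \<phi> x
           \<longrightarrow> \<phi> x = g x"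
    using gA inA by metis
  have lscU: "\<forall>x\<in>U. lsc_pt (restr U g) x"
    using sup_aff_lsc[OF g_def] by (simp add: U_def)
  have gleU: "\<forall>x\<in>U. g x \<le> \<phi> x" using gle UU' by blast
  have basic: "open U" "convex U" "xb \<in> U" "open V" "convex V" "vb \<in> V" using bb by (auto simp: U_def V_def)
  show ?thesis unfolding var_convex_def
    using basic ev(1) gcvU lscU gleU EQ EQ2 by blast
qed

theorem corollary4p8:
  fixes \<phi> :: "'a::{real_inner, complete_space} \<Rightarrow> ereal"
    and xb vb :: 'a
  assumes nonneginf: "\<forall>x. \<phi> x \<noteq> -\<infinity>"
    and lsc: "lsc_fun \<phi>"
    and pb: "prox_bounded \<phi>"
    and dom: "xb \<in> edom \<phi>"
    and sub: "vb \<in> lim_subdiff \<phi> xb"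
  shows "(var_convex \<phi> xb vb \<longrightarrow>
            (prox_regular \<phi> xb vb \<and>
             (\<exists>lam0>0. \<forall>lam. 0 < lam \<and> lam < lam0 \<longrightarrow>
                 locally_convex_around (moreau_env lam \<phi>) (xb + lam *\<^sub>R vb))))
       \<and> (weakly_seq_lsc_around \<phi> xb \<longrightarrow>
            (prox_regular \<phi> xb vb \<and>
             (\<exists>lam0>0. \<forall>lam. 0 < lam \<and> lam < lam0 \<longrightarrow>
                 locally_convex_around (moreau_env lam \<phi>) (xb + lam *\<^sub>R vb)))
            \<longrightarrow> var_convex \<phi> xb vb)"
  using dir1[OF nonneginf pb dom sub] dir2[OF nonneginf lsc pb dom sub] by blast

end
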